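(* Let $P$ be a poset and $f:(X,\varphi_X)\to(Y,\varphi_Y)$ a map in $\mathrm{Top}_{N(P)}$. There exist a strongly filtered space $(Z,\varphi_Z)$, a fibration $q:(Z,\varphi_Z)\to(Y,\varphi_Y)$, and filtered maps $i:(X,\varphi_X)\to(Z,\varphi_Z)$ and $r:(Z,\varphi_Z)\to(X,\varphi_X)$ such that $f=q\circ i$, $r\circ i=\mathrm{Id}_X$, and $i\circ r$ is filtered homotopic to $\mathrm{Id}_Z$.
   Context: $\mathrm{Top}$ is the category of $\Delta$-generated spaces. $\mathrm{Top}_{N(P)}$ (strongly filtered spaces): spaces $X$ with continuous $\varphi_X:X\to\|N(P)\|$, filtered maps commuting over $\|N(P)\|$. A filtered homotopy is a filtered map $(Z\times[0,1],\varphi_Z\circ pr_Z)\to(Z,\varphi_Z)$. For a nondegenerate simplex $\varphi:\Delta^n\hookrightarrow N(P)$, $\|\Delta^\varphi\|_{N(P)}=(\|\Delta^n\|,\|\varphi\|)$; $\mathcal C^0_{N(P)}(A,X)$ is the space of filtered maps (subspace topology), and $D(X)(\Delta^\varphi)=\mathrm{Sing}(\mathcal C^0_{N(P)}(\|\Delta^\varphi\|_{N(P)},X))$. A map $q$ is a fibration if $D(q)(\Delta^\varphi)$ is a Kan fibration for every nondegenerate simplex $\Delta^\varphi$ of $N(P)$. *)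

theory Defs
  imports "HOL-Homology.Homology"
begin

definition simplex_top :: "nat \<Rightarrow> (nat \<Rightarrow> real) topology" where
  "simplex_top n = subtopology (powertop_real UNIV) (standard_simplex n)"

definition delta_generated :: "'a topology \<Rightarrow> bool" where
  "delta_generated X \<longleftrightarrow>
     (\<forall>U. U \<subseteq> topspace X \<longrightarrow>
        (\<forall>n \<sigma>. continuous_map (simplex_top n) X \<sigma> \<longrightarrow>
              openin (simplex_top n) {t \<in> standard_simplex n. \<sigma> t \<in> U})
        \<longrightarrow> openin X U)"

(* Delta-ification (the coreflection of Top_all into Delta-generated spaces) *)
definition dtop :: "'a topology \<Rightarrow> 'a topology" where
  "dtop X = topology (\<lambda>U. U \<subseteq> topspace X \<and>
        (\<forall>n \<sigma>. continuous_map (simplex_top n) X \<sigma> \<longrightarrow>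
              openin (simplex_top n) {t \<in> standard_simplex n. \<sigma> t \<in> U}))"

(* nondegenerate n-simplices of the nerve N(P): strict chains c 0 < ... < c n *)
definition strict_chain :: "nat \<Rightarrow> (nat \<Rightarrow> 'p::order) \<Rightarrow> bool" where
  "strict_chain n c \<longleftrightarrow> (\<forall>i<n. c i < c (Suc i))"

(* the realization ||phi|| : ||Delta^n|| -> ||N(P)|| of the simplex c; points of
   ||N(P)|| are barycentric-coordinate functions P -> real *)
definition realize_simplex :: "nat \<Rightarrow> (nat \<Rightarrow> 'p::order) \<Rightarrow> (nat \<Rightarrow> real) \<Rightarrow> 'p \<Rightarrow> real" where
  "realize_simplex n c t = (\<lambda>p. \<Sum>i \<in> {i. i \<le> n \<and> c i = p}. t i)"

definition nerve_points :: "('p::order \<Rightarrow> real) set" where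
  "nerve_points = (\<Union>n. \<Union>c \<in> {c. strict_chain n c}. realize_simplex n c ` standard_simplex n)"

definition nerve_realization :: "('p::order \<Rightarrow> real) topology" where
  "nerve_realization = topology (\<lambda>U. U \<subseteq> nerve_points \<and>
      (\<forall>n c. strict_chain n c \<longrightarrow>
          openin (simplex_top n) {t \<in> standard_simplex n. realize_simplex n c t \<in> U}))"

definition strongly_filtered :: "'a topology \<Rightarrow> ('a \<Rightarrow> 'p::order \<Rightarrow> real) \<Rightarrow> bool" where
  "strongly_filtered X \<phi> \<longleftrightarrow> delta_generated X \<and> continuous_map X nerve_realization \<phi>"

definition filtered_map ::
  "'a topology \<Rightarrow> ('a \<Rightarrow> 'p::order \<Rightarrow> real) \<Rightarrow> 'b topology \<Rightarrow> ('b \<Rightarrow> 'p \<Rightarrow> real) \<Rightarrow> ('a \<Rightarrow> 'b) \<Rightarrow> bool" where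
  "filtered_map X \<phi>X Y \<phi>Y f \<longleftrightarrow> continuous_map X Y f \<and> (\<forall>x \<in> topspace X. \<phi>Y (f x) = \<phi>X x)"

(* filtered homotopy: a filtered map (Z x [0,1], phi_Z o pr_Z) -> (Z, phi_Z),
   the product taken in Delta-generated spaces *)
definition filtered_homotopic ::
  "'a topology \<Rightarrow> ('a \<Rightarrow> 'p::order \<Rightarrow> real) \<Rightarrow> ('a \<Rightarrow> 'a) \<Rightarrow> ('a \<Rightarrow> 'a) \<Rightarrow> bool" where
  "filtered_homotopic Z \<phi> g h \<longleftrightarrow>
     (\<exists>H. filtered_map (dtop (prod_topology Z (top_of_set {0..1::real}))) (\<lambda>(z,t). \<phi> z) Z \<phi> H
          \<and> (\<forall>z \<in> topspace Z. H (z, 0) = g z \<and> H (z, 1) = h z))"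

definition compact_open :: "'s topology \<Rightarrow> 'x topology \<Rightarrow> ('s \<Rightarrow> 'x) topology" where
  "compact_open A X = topology_generated_by
     {{f. continuous_map A X f \<and> f \<in> extensional (topspace A) \<and> f ` K \<subseteq> U} | K U.
        compactin A K \<and> openin X U}"

(* internal hom in Delta-generated spaces *)
definition mapping_space :: "'s topology \<Rightarrow> 'x topology \<Rightarrow> ('s \<Rightarrow> 'x) topology" where
  "mapping_space A X = dtop (compact_open A X)"

definition filtered_mapping_space ::
  "'s topology \<Rightarrow> ('s \<Rightarrow> 'p::order \<Rightarrow> real) \<Rightarrow> 'x topology \<Rightarrow> ('x \<Rightarrow> 'p \<Rightarrow> real) \<Rightarrow> ('s \<Rightarrow> 'x) topology" where
  "filtered_mapping_space A \<phi>A X \<phi>X =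
     dtop (subtopology (mapping_space A X) {f. filtered_map A \<phi>A X \<phi>X f})"

definition postcomp :: "'s topology \<Rightarrow> ('x \<Rightarrow> 'y) \<Rightarrow> ('s \<Rightarrow> 'x) \<Rightarrow> ('s \<Rightarrow> 'y)" where
  "postcomp A q g = restrict (q \<circ> g) (topspace A)"

definition sing_map :: "nat \<Rightarrow> ('a \<Rightarrow> 'b) \<Rightarrow> ((nat \<Rightarrow> real) \<Rightarrow> 'a) \<Rightarrow> ((nat \<Rightarrow> real) \<Rightarrow> 'b)" where
  "sing_map m h \<sigma> = restrict (h \<circ> \<sigma>) (standard_simplex m)"

(* Sing(h) : Sing(M) -> Sing(N) is a Kan fibration: every horn Lambda^n_k -> Sing M
   (given by compatible faces x i, i ~= k) together with an n-simplex y of Sing N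
   extending its image admits a lift *)
definition kan_fibration_sing :: "'a topology \<Rightarrow> 'b topology \<Rightarrow> ('a \<Rightarrow> 'b) \<Rightarrow> bool" where
  "kan_fibration_sing M N h \<longleftrightarrow>
     (\<forall>n k x y. 1 \<le> n \<longrightarrow> k \<le> n \<longrightarrow>
        (\<forall>i\<le>n. i \<noteq> k \<longrightarrow> singular_simplex (n - 1) M (x i)) \<longrightarrow>
        (\<forall>i j. i < j \<longrightarrow> j \<le> n \<longrightarrow> i \<noteq> k \<longrightarrow> j \<noteq> k \<longrightarrow>
            singular_face (n - 1) i (x j) = singular_face (n - 1) (j - 1) (x i)) \<longrightarrow>
        singular_simplex n N y \<longrightarrow>
        (\<forall>i\<le>n. i \<noteq> k \<longrightarrow> singular_face n i y = sing_map (n - 1) h (x i)) \<longrightarrow>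
        (\<exists>z. singular_simplex n M z \<and> (\<forall>i\<le>n. i \<noteq> k \<longrightarrow> singular_face n i z = x i)
             \<and> sing_map n h z = y))"

(* fibrations in Top_N(P): D(q)(Delta^phi) is a Kan fibration for every
   nondegenerate simplex phi of N(P) *)
definition filtered_fibration ::
  "'a topology \<Rightarrow> ('a \<Rightarrow> 'p::order \<Rightarrow> real) \<Rightarrow> 'b topology \<Rightarrow> ('b \<Rightarrow> 'p \<Rightarrow> real) \<Rightarrow> ('a \<Rightarrow> 'b) \<Rightarrow> bool" where
  "filtered_fibration Z \<phi>Z Y \<phi>Y q \<longleftrightarrow>
     (\<forall>n c. strict_chain n c \<longrightarrow>
        kan_fibration_sing
          (filtered_mapping_space (simplex_top n) (realize_simplex n c) Z \<phi>Z)
          (filtered_mapping_space (simplex_top n) (realize_simplex n c) Y \<phi>Y)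
          (postcomp (simplex_top n) q))"

end

theory Submission
  imports Defs "HOL-Analysis.Analysis"
begin


lemma istopology_dtop:
  "istopology (\<lambda>U. U \<subseteq> topspace X \<and>
        (\<forall>n \<sigma>. continuous_map (simplex_top n) X \<sigma> \<longrightarrow>
              openin (simplex_top n) {t \<in> standard_simplex n. \<sigma> t \<in> U}))"
proof -
  have i: "\<And>A \<sigma> S T. {t \<in> A. \<sigma> t \<in> S \<inter> T} = {t \<in> A. \<sigma> t \<in> S} \<inter> {t \<in> A. \<sigma> t \<in> T}" by auto
  have u: "\<And>A \<sigma> K. {t \<in> A. \<sigma> t \<in> \<Union>K} = (\<Union>S\<in>K. {t \<in> A. \<sigma> t \<in> S})" by auto
  show ?thesis unfolding istopology_def i u
    by (auto intro!: openin_Int openin_Union)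
qed

lemma openin_dtop:
  "openin (dtop X) U \<longleftrightarrow> U \<subseteq> topspace X \<and>
        (\<forall>n \<sigma>. continuous_map (simplex_top n) X \<sigma> \<longrightarrow>
              openin (simplex_top n) {t \<in> standard_simplex n. \<sigma> t \<in> U})"
  unfolding dtop_def by (simp add: topology_inverse'[OF istopology_dtop])

lemma topspace_simplex_top [simp]: "topspace (simplex_top n) = standard_simplex n"
  by (simp add: simplex_top_def)

lemma openin_imp_openin_dtop:
  assumes "openin X U" shows "openin (dtop X) U"
  unfolding openin_dtop
proof (intro conjI allI impI)
  show "U \<subseteq> topspace X" using assms openin_subset by blast
  fix n \<sigma> assume "continuous_map (simplex_top n) X \<sigma>"
  then have "openin (simplex_top n) {t \<in> topspace (simplex_top n). \<sigma> t \<in> U}"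
    using assms openin_continuous_map_preimage by blast
  then show "openin (simplex_top n) {t \<in> standard_simplex n. \<sigma> t \<in> U}" by simp
qed

lemma topspace_dtop [simp]: "topspace (dtop X) = topspace X"
proof
  show "topspace (dtop X) \<subseteq> topspace X"
    by (metis openin_dtop openin_topspace)
  show "topspace X \<subseteq> topspace (dtop X)"
    using openin_imp_openin_dtop[OF openin_topspace[of X]] openin_subset by blast
qed

lemma continuous_map_simplex_dtop:
  "continuous_map (simplex_top n) (dtop X) \<sigma> \<longleftrightarrow> continuous_map (simplex_top n) X \<sigma>"
proof
  assume "continuous_map (simplex_top n) (dtop X) \<sigma>"
  then show "continuous_map (simplex_top n) X \<sigma>"
    unfolding continuous_map_def using openin_imp_openin_dtop by auto
next
  assume c: "continuous_map (simplex_top n) X \<sigma>"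
  show "continuous_map (simplex_top n) (dtop X) \<sigma>"
    unfolding continuous_map_def
  proof (intro conjI allI impI)
    show "\<sigma> \<in> topspace (simplex_top n) \<rightarrow> topspace (dtop X)"
      using c by (simp add: continuous_map_def)
    fix U assume "openin (dtop X) U"
    then show "openin (simplex_top n) {x \<in> topspace (simplex_top n). \<sigma> x \<in> U}"
      using c unfolding openin_dtop by simp
  qed
qed

lemma continuous_map_from_dtop:
  assumes "\<And>x. x \<in> topspace X \<Longrightarrow> g x \<in> topspace Y"
    and "\<And>n \<sigma>. continuous_map (simplex_top n) X \<sigma> \<Longrightarrow> continuous_map (simplex_top n) Y (g \<circ> \<sigma>)"
  shows "continuous_map (dtop X) Y g"
  unfolding continuous_map_def
proof (intro conjI allI impI)
  show "g \<in> topspace (dtop X) \<rightarrow> topspace Y" using assms(1) by auto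
  fix V assume V: "openin Y V"
  show "openin (dtop X) {x \<in> topspace (dtop X). g x \<in> V}"
    unfolding openin_dtop
  proof (intro conjI allI impI)
    fix n \<sigma> assume c: "continuous_map (simplex_top n) X \<sigma>"
    have "openin (simplex_top n) {t \<in> topspace (simplex_top n). (g \<circ> \<sigma>) t \<in> V}"
      using assms(2)[OF c] V openin_continuous_map_preimage by blast
    moreover have "{t \<in> standard_simplex n. \<sigma> t \<in> {x \<in> topspace (dtop X). g x \<in> V}}
       = {t \<in> topspace (simplex_top n). (g \<circ> \<sigma>) t \<in> V}"
      using c by (auto simp: continuous_map_def)
    ultimately show "openin (simplex_top n) {t \<in> standard_simplex n. \<sigma> t \<in> {x \<in> topspace (dtop X). g x \<in> V}}"
      by simp
  qed auto
qed

lemma continuous_map_from_delta_generated: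
  assumes dg: "delta_generated X"
    and "\<And>x. x \<in> topspace X \<Longrightarrow> g x \<in> topspace Y"
    and "\<And>n \<sigma>. continuous_map (simplex_top n) X \<sigma> \<Longrightarrow> continuous_map (simplex_top n) Y (g \<circ> \<sigma>)"
  shows "continuous_map X Y g"
  unfolding continuous_map_def
proof (intro conjI allI impI)
  show "g \<in> topspace X \<rightarrow> topspace Y" using assms(2) by auto
  fix V assume V: "openin Y V"
  show "openin X {x \<in> topspace X. g x \<in> V}"
    using dg unfolding delta_generated_def
  proof (elim allE impE)
    show "{x \<in> topspace X. g x \<in> V} \<subseteq> topspace X" by auto
    show "\<forall>n \<sigma>. continuous_map (simplex_top n) X \<sigma> \<longrightarrow>
        openin (simplex_top n) {t \<in> standard_simplex n. \<sigma> t \<in> {x \<in> topspace X. g x \<in> V}}"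
    proof (intro allI impI)
      fix n \<sigma> assume c: "continuous_map (simplex_top n) X \<sigma>"
      have "openin (simplex_top n) {t \<in> topspace (simplex_top n). (g \<circ> \<sigma>) t \<in> V}"
        using assms(3)[OF c] V openin_continuous_map_preimage by blast
      moreover have "{t \<in> standard_simplex n. \<sigma> t \<in> {x \<in> topspace X. g x \<in> V}}
         = {t \<in> topspace (simplex_top n). (g \<circ> \<sigma>) t \<in> V}"
        using c by (auto simp: continuous_map_def)
      ultimately show "openin (simplex_top n) {t \<in> standard_simplex n. \<sigma> t \<in> {x \<in> topspace X. g x \<in> V}}"
        by simp
    qed
  qed
qed

lemma topspace_compact_open:
  "topspace (compact_open A X) = {f. continuous_map A X f \<and> f \<in> extensional (topspace A)}"
  unfolding compact_open_def topology_generated_by_topspace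
proof
  show "\<Union> {{f. continuous_map A X f \<and> f \<in> extensional (topspace A) \<and> f ` K \<subseteq> U} |K U.
        compactin A K \<and> openin X U} \<subseteq> {f. continuous_map A X f \<and> f \<in> extensional (topspace A)}"
    by auto
  show "{f. continuous_map A X f \<and> f \<in> extensional (topspace A)} \<subseteq> \<Union> {{f. continuous_map A X f \<and> f \<in> extensional (topspace A) \<and> f ` K \<subseteq> U} |K U.
        compactin A K \<and> openin X U}"
  proof
    fix f assume "f \<in> {f. continuous_map A X f \<and> f \<in> extensional (topspace A)}"
    then show "f \<in> \<Union> {{f. continuous_map A X f \<and> f \<in> extensional (topspace A) \<and> f ` K \<subseteq> U} |K U.
        compactin A K \<and> openin X U}"
      by (intro UnionI[of "{f. continuous_map A X f \<and> f \<in> extensional (topspace A) \<and> f ` {} \<subseteq> topspace X}"]) auto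
  qed
qed

lemma openin_compact_open_basic:
  assumes "compactin A K" "openin X U"
  shows "openin (compact_open A X) {f. continuous_map A X f \<and> f \<in> extensional (topspace A) \<and> f ` K \<subseteq> U}"
  unfolding compact_open_def using assms by (intro topology_generated_by_Basis) auto

lemma continuous_map_into_compact_open:
  assumes "\<And>w. w \<in> topspace W \<Longrightarrow> continuous_map A X (g w) \<and> g w \<in> extensional (topspace A)"
    and "\<And>K U. compactin A K \<Longrightarrow> openin X U \<Longrightarrow> openin W {w \<in> topspace W. g w ` K \<subseteq> U}"
  shows "continuous_map W (compact_open A X) g"
  unfolding compact_open_def
proof (rule continuous_on_generated_topo)
  fix V assume "V \<in> {{f. continuous_map A X f \<and> f \<in> extensional (topspace A) \<and> f ` K \<subseteq> U} |K U.
        compactin A K \<and> openin X U}"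
  then obtain K U where KU: "compactin A K" "openin X U"
    and V: "V = {f. continuous_map A X f \<and> f \<in> extensional (topspace A) \<and> f ` K \<subseteq> U}" by blast
  have "g -` V \<inter> topspace W = {w \<in> topspace W. g w ` K \<subseteq> U}"
    using assms(1) V by auto
  then show "openin W (g -` V \<inter> topspace W)" using assms(2)[OF KU] by simp
next
  show "g ` topspace W \<subseteq> \<Union> {{f. continuous_map A X f \<and> f \<in> extensional (topspace A) \<and> f ` K \<subseteq> U} |K U.
        compactin A K \<and> openin X U}"
    using topspace_compact_open[of A X] assms(1) unfolding compact_open_def topology_generated_by_topspace
    by auto
qed

lemma continuous_map_curry_compact_open:
  assumes F: "continuous_map (prod_topology W A) X F"
  shows "continuous_map W (compact_open A X) (\<lambda>w. restrict (\<lambda>a. F (w, a)) (topspace A))"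
proof (rule continuous_map_into_compact_open)
  fix w assume w: "w \<in> topspace W"
  have "continuous_map A X (\<lambda>a. F (w, a))"
    using continuous_map_compose[OF _ F, of A "\<lambda>a. (w,a)"] w
    by (auto simp: continuous_map_pairwise o_def)
  then show "continuous_map A X (restrict (\<lambda>a. F (w, a)) (topspace A)) \<and>
         restrict (\<lambda>a. F (w, a)) (topspace A) \<in> extensional (topspace A)"
    by (auto intro: continuous_map_eq)
next
  fix K U assume K: "compactin A K" and U: "openin X U"
  have O: "openin (prod_topology W A) {x \<in> topspace (prod_topology W A). F x \<in> U}"
    using F U openin_continuous_map_preimage by blast
  have KA: "K \<subseteq> topspace A" using K compactin_subset_topspace by blast
  show "openin W {w \<in> topspace W. restrict (\<lambda>a. F (w, a)) (topspace A) ` K \<subseteq> U}"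
  proof (subst openin_subopen, intro ballI)
    fix w assume w: "w \<in> {w \<in> topspace W. restrict (\<lambda>a. F (w, a)) (topspace A) ` K \<subseteq> U}"
    have Fin: "F (w, a) \<in> U" if "a \<in> K" for a
    proof -
      have "restrict (\<lambda>a. F (w, a)) (topspace A) a \<in> U" using w that by blast
      then show ?thesis using that KA by auto
    qed
    have "w \<in> topspace W" using w by blast
    have "{w} \<times> K \<subseteq> {x \<in> topspace (prod_topology W A). F x \<in> U}"
    proof
      fix x assume "x \<in> {w} \<times> K"
      then obtain a where xa: "x = (w, a)" "a \<in> K" by blast
      have "a \<in> topspace A" using xa(2) KA by blast
      then show "x \<in> {x \<in> topspace (prod_topology W A). F x \<in> U}"
        using xa Fin[OF xa(2)] \<open>w \<in> topspace W\<close> by simp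
    qed
    from tube_lemma_right[OF O K \<open>w \<in> topspace W\<close> this]
    obtain U1 V1 where UV: "openin W U1" "openin A V1" "w \<in> U1" "K \<subseteq> V1"
        "U1 \<times> V1 \<subseteq> {x \<in> topspace (prod_topology W A). F x \<in> U}"
      by blast
    have U1W: "U1 \<subseteq> topspace W" using UV(1) openin_subset by blast
    show "\<exists>T. openin W T \<and> w \<in> T \<and> T \<subseteq> {w \<in> topspace W. restrict (\<lambda>a. F (w, a)) (topspace A) ` K \<subseteq> U}"
    proof (intro exI conjI)
      show "U1 \<subseteq> {w \<in> topspace W. restrict (\<lambda>a. F (w, a)) (topspace A) ` K \<subseteq> U}"
      proof
        fix w' assume w': "w' \<in> U1"
        have "F (w', a) \<in> U" if "a \<in> K" for a using UV(4,5) w' that by blast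
        then show "w' \<in> {w \<in> topspace W. restrict (\<lambda>a. F (w, a)) (topspace A) ` K \<subseteq> U}"
          using U1W w' KA by auto
      qed
    qed (use UV in auto)
  qed
qed

definition loc_cpt :: "'a topology \<Rightarrow> bool" where
  "loc_cpt A \<longleftrightarrow> (\<forall>a N. openin A N \<and> a \<in> N \<longrightarrow>
      (\<exists>V K. openin A V \<and> compactin A K \<and> a \<in> V \<and> V \<subseteq> K \<and> K \<subseteq> N))"

lemma compact_Hausdorff_loc_cpt:
  assumes "compact_space A" "Hausdorff_space A"
  shows "loc_cpt A"
proof -
  have "regular_space A" by (rule compact_Hausdorff_imp_regular_space[OF assms])
  then have nb: "neighbourhood_base_of (closedin A) A"
    by (simp add: neighbourhood_base_of_closedin)
  show ?thesis unfolding loc_cpt_def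
  proof (intro allI impI)
    fix a N assume "openin A N \<and> a \<in> N"
    then obtain U V where UV: "openin A U" "closedin A V" "a \<in> U" "U \<subseteq> V" "V \<subseteq> N"
      using nb[unfolded neighbourhood_base_of, rule_format, of N a] by blast
    have "compactin A V" using closedin_compact_space[OF assms(1) UV(2)] .
    then show "\<exists>V K. openin A V \<and> compactin A K \<and> a \<in> V \<and> V \<subseteq> K \<and> K \<subseteq> N"
      using UV by blast
  qed
qed

lemma continuous_map_uncurry_compact_open:
  assumes A: "loc_cpt A" and g: "continuous_map W (compact_open A X) g"
  shows "continuous_map (prod_topology W A) X (\<lambda>(w, a). g w a)"
  unfolding continuous_map_def
proof (intro conjI allI impI)
  have gt: "\<And>w. w \<in> topspace W \<Longrightarrow> continuous_map A X (g w) \<and> g w \<in> extensional (topspace A)"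
    using g topspace_compact_open[of A X] unfolding continuous_map_def by blast
  then show "(\<lambda>(w, a). g w a) \<in> topspace (prod_topology W A) \<rightarrow> topspace X"
    by (auto simp: continuous_map_def)
  fix U assume U: "openin X U"
  show "openin (prod_topology W A) {x \<in> topspace (prod_topology W A). (case x of (w, a) \<Rightarrow> g w a) \<in> U}"
  proof (subst openin_subopen, intro ballI)
    fix p assume p: "p \<in> {x \<in> topspace (prod_topology W A). (case x of (w, a) \<Rightarrow> g w a) \<in> U}"
    obtain w a where pw: "p = (w, a)" by fastforce
    have w: "w \<in> topspace W" and a: "a \<in> topspace A" and gin: "g w a \<in> U" using p pw by auto
    have "openin A {a \<in> topspace A. g w a \<in> U}"
      using gt[OF w] U openin_continuous_map_preimage by blast
    moreover have "a \<in> {a \<in> topspace A. g w a \<in> U}" using a gin by simp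
    ultimately obtain V K where VK: "openin A V" "compactin A K" "a \<in> V" "V \<subseteq> K" "K \<subseteq> {a \<in> topspace A. g w a \<in> U}"
      using A[unfolded loc_cpt_def, rule_format, of "{a \<in> topspace A. g w a \<in> U}" a] by blast
    have "openin W {w \<in> topspace W. g w \<in> {f. continuous_map A X f \<and> f \<in> extensional (topspace A) \<and> f ` K \<subseteq> U}}"
      using openin_continuous_map_preimage[OF g openin_compact_open_basic[OF VK(2) U]] by simp
    moreover have "{w \<in> topspace W. g w \<in> {f. continuous_map A X f \<and> f \<in> extensional (topspace A) \<and> f ` K \<subseteq> U}}
        = {w \<in> topspace W. g w ` K \<subseteq> U}" using gt by auto
    ultimately have O: "openin W {w \<in> topspace W. g w ` K \<subseteq> U}" by simp
    show "\<exists>T. openin (prod_topology W A) T \<and> p \<in> T \<and> T \<subseteq> {x \<in> topspace (prod_topology W A). (case x of (w, a) \<Rightarrow> g w a) \<in> U}"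
    proof (intro exI conjI)
      show "openin (prod_topology W A) ({w \<in> topspace W. g w ` K \<subseteq> U} \<times> V)"
        using O VK(1) by (simp add: openin_prod_Times_iff)
      have "K \<subseteq> topspace A" using VK(2) compactin_subset_topspace by blast
      then show "p \<in> {w \<in> topspace W. g w ` K \<subseteq> U} \<times> V" using pw w VK(3,4,5) by auto
      have "V \<subseteq> topspace A" using VK(1) openin_subset by blast
      then show "{w \<in> topspace W. g w ` K \<subseteq> U} \<times> V \<subseteq> {x \<in> topspace (prod_topology W A). (case x of (w, a) \<Rightarrow> g w a) \<in> U}"
        using VK(4) by auto
    qed
  qed
qed

lemma loc_cpt_simplex: "loc_cpt (simplex_top n)"
proof (rule compact_Hausdorff_loc_cpt)
  show "compact_space (simplex_top n)"
    unfolding simplex_top_def by (rule compact_space_subtopology[OF compactin_standard_simplex])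
  show "Hausdorff_space (simplex_top n)"
    unfolding simplex_top_def
    by (rule Hausdorff_space_subtopology) (metis Hausdorff_space_euclidean Hausdorff_space_product_topology)
qed

lemma loc_cpt_I: "loc_cpt (top_of_set {0..1::real})"
proof (rule compact_Hausdorff_loc_cpt)
  show "compact_space (top_of_set {0..1::real})"
    by (simp add: compact_space_subtopology compactin_euclidean_iff)
  show "Hausdorff_space (top_of_set {0..1::real})"
    by (simp add: Hausdorff_space_subtopology)
qed



abbreviation II :: "real topology" where "II \<equiv> top_of_set {0..1}"

lemma topspace_II [simp]: "topspace II = {0..1}" by simp

definition goodZ :: "'a topology \<Rightarrow> 'b topology \<Rightarrow> ('a \<times> (real \<Rightarrow> 'b)) set \<Rightarrow> nat
   \<Rightarrow> ((nat \<Rightarrow> real) \<Rightarrow> 'a \<times> (real \<Rightarrow> 'b)) \<Rightarrow> bool" where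
  "goodZ X Y S n \<sigma> \<longleftrightarrow> (\<forall>t \<in> standard_simplex n. \<sigma> t \<in> S)
     \<and> continuous_map (simplex_top n) X (\<lambda>t. fst (\<sigma> t))
     \<and> continuous_map (prod_topology (simplex_top n) II) Y (\<lambda>(t, \<tau>). snd (\<sigma> t) \<tau>)"

definition Ztop :: "'a topology \<Rightarrow> 'b topology \<Rightarrow> ('a \<times> (real \<Rightarrow> 'b)) set \<Rightarrow> ('a \<times> (real \<Rightarrow> 'b)) topology" where
  "Ztop X Y S = topology (\<lambda>U. U \<subseteq> S \<and>
      (\<forall>n \<sigma>. goodZ X Y S n \<sigma> \<longrightarrow> openin (simplex_top n) {t \<in> standard_simplex n. \<sigma> t \<in> U}))"

lemma istopology_Ztop:
  "istopology (\<lambda>U. U \<subseteq> S \<and>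
      (\<forall>n \<sigma>. goodZ X Y S n \<sigma> \<longrightarrow> openin (simplex_top n) {t \<in> standard_simplex n. \<sigma> t \<in> U}))"
proof -
  have i: "\<And>A \<sigma> S T. {t \<in> A. \<sigma> t \<in> S \<inter> T} = {t \<in> A. \<sigma> t \<in> S} \<inter> {t \<in> A. \<sigma> t \<in> T}" by auto
  have u: "\<And>A \<sigma> K. {t \<in> A. \<sigma> t \<in> \<Union>K} = (\<Union>S\<in>K. {t \<in> A. \<sigma> t \<in> S})" by auto
  show ?thesis unfolding istopology_def i u
    by (auto intro!: openin_Int openin_Union)
qed

lemma openin_Ztop:
  "openin (Ztop X Y S) U \<longleftrightarrow> U \<subseteq> S \<and>
      (\<forall>n \<sigma>. goodZ X Y S n \<sigma> \<longrightarrow> openin (simplex_top n) {t \<in> standard_simplex n. \<sigma> t \<in> U})"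
  unfolding Ztop_def by (simp add: topology_inverse'[OF istopology_Ztop])

lemma topspace_Ztop [simp]: "topspace (Ztop X Y S) = S"
proof
  show "topspace (Ztop X Y S) \<subseteq> S" by (metis openin_Ztop openin_topspace)
  have "openin (Ztop X Y S) S"
    unfolding openin_Ztop
  proof (intro conjI allI impI)
    fix n \<sigma> assume "goodZ X Y S n \<sigma>"
    then have "{t \<in> standard_simplex n. \<sigma> t \<in> S} = topspace (simplex_top n)"
      unfolding goodZ_def by auto
    then show "openin (simplex_top n) {t \<in> standard_simplex n. \<sigma> t \<in> S}"
      by (metis openin_topspace)
  qed simp
  then show "S \<subseteq> topspace (Ztop X Y S)" by (simp add: openin_subset)
qed

lemma goodZ_imp_cont:
  assumes "goodZ X Y S n \<sigma>"
  shows "continuous_map (simplex_top n) (Ztop X Y S) \<sigma>"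
  unfolding continuous_map_def
proof (intro conjI allI impI)
  show "\<sigma> \<in> topspace (simplex_top n) \<rightarrow> topspace (Ztop X Y S)"
    using assms unfolding goodZ_def by auto
  fix U assume "openin (Ztop X Y S) U"
  then show "openin (simplex_top n) {x \<in> topspace (simplex_top n). \<sigma> x \<in> U}"
    using assms unfolding openin_Ztop by simp
qed

lemma delta_generated_Ztop: "delta_generated (Ztop X Y S)"
  unfolding delta_generated_def
proof (intro allI impI)
  fix U assume U: "U \<subseteq> topspace (Ztop X Y S)"
    and h: "\<forall>n \<sigma>. continuous_map (simplex_top n) (Ztop X Y S) \<sigma> \<longrightarrow>
             openin (simplex_top n) {t \<in> standard_simplex n. \<sigma> t \<in> U}"
  show "openin (Ztop X Y S) U"
    unfolding openin_Ztop using U h goodZ_imp_cont[of X Y S] by auto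
qed

lemma continuous_map_from_Ztop:
  assumes "\<And>z. z \<in> S \<Longrightarrow> g z \<in> topspace W"
    and "\<And>n \<sigma>. goodZ X Y S n \<sigma> \<Longrightarrow> continuous_map (simplex_top n) W (g \<circ> \<sigma>)"
  shows "continuous_map (Ztop X Y S) W g"
  unfolding continuous_map_def
proof (intro conjI allI impI)
  show "g \<in> topspace (Ztop X Y S) \<rightarrow> topspace W" using assms(1) by auto
  fix V assume V: "openin W V"
  show "openin (Ztop X Y S) {x \<in> topspace (Ztop X Y S). g x \<in> V}"
    unfolding openin_Ztop
  proof (intro conjI allI impI)
    fix n \<sigma> assume c: "goodZ X Y S n \<sigma>"
    have "openin (simplex_top n) {t \<in> topspace (simplex_top n). (g \<circ> \<sigma>) t \<in> V}"
      using assms(2)[OF c] V openin_continuous_map_preimage by blast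
    moreover have "{t \<in> standard_simplex n. \<sigma> t \<in> {x \<in> topspace (Ztop X Y S). g x \<in> V}}
       = {t \<in> topspace (simplex_top n). (g \<circ> \<sigma>) t \<in> V}"
      using c by (auto simp: goodZ_def)
    ultimately show "openin (simplex_top n) {t \<in> standard_simplex n. \<sigma> t \<in> {x \<in> topspace (Ztop X Y S). g x \<in> V}}"
      by simp
  qed auto
qed

lemma continuous_map_fst_Ztop:
  assumes "\<And>z. z \<in> S \<Longrightarrow> fst z \<in> topspace X"
  shows "continuous_map (Ztop X Y S) X fst"
proof (rule continuous_map_from_Ztop)
  fix n \<sigma> assume "goodZ X Y S n \<sigma>"
  then show "continuous_map (simplex_top n) X (fst \<circ> \<sigma>)"
    unfolding goodZ_def o_def by blast
qed (use assms in auto)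

lemma continuous_map_snd_Ztop:
  assumes "\<And>z. z \<in> S \<Longrightarrow> continuous_map II Y (snd z) \<and> snd z \<in> extensional {0..1}"
  shows "continuous_map (Ztop X Y S) (compact_open II Y) snd"
proof (rule continuous_map_from_Ztop)
  fix z assume "z \<in> S"
  then show "snd z \<in> topspace (compact_open II Y)"
    using assms by (simp add: topspace_compact_open)
next
  fix n \<sigma> assume g: "goodZ X Y S n \<sigma>"
  then have c: "continuous_map (prod_topology (simplex_top n) II) Y (\<lambda>(t, \<tau>). snd (\<sigma> t) \<tau>)"
    unfolding goodZ_def by blast
  have "continuous_map (simplex_top n) (compact_open II Y)
      (\<lambda>w. restrict (\<lambda>a. (\<lambda>(t, \<tau>). snd (\<sigma> t) \<tau>) (w, a)) (topspace II))"
    by (rule continuous_map_curry_compact_open[OF c])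
  moreover have "\<And>w. w \<in> topspace (simplex_top n) \<Longrightarrow>
      restrict (\<lambda>a. (\<lambda>(t, \<tau>). snd (\<sigma> t) \<tau>) (w, a)) (topspace II) = (snd \<circ> \<sigma>) w"
  proof -
    fix w assume "w \<in> topspace (simplex_top n)"
    then have "\<sigma> w \<in> S" using g unfolding goodZ_def by simp
    then have "snd (\<sigma> w) \<in> extensional {0..1}" using assms by blast
    then show "restrict (\<lambda>a. (\<lambda>(t, \<tau>). snd (\<sigma> t) \<tau>) (w, a)) (topspace II) = (snd \<circ> \<sigma>) w"
      by (auto simp: restrict_def extensional_def)
  qed
  ultimately show "continuous_map (simplex_top n) (compact_open II Y) (snd \<circ> \<sigma>)"
    using continuous_map_eq by blast
qed

lemma cont_into_Ztop_imp:
  assumes S1: "\<And>z. z \<in> S \<Longrightarrow> fst z \<in> topspace X"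
    and S2: "\<And>z. z \<in> S \<Longrightarrow> continuous_map II Y (snd z) \<and> snd z \<in> extensional {0..1}"
    and g: "continuous_map W (Ztop X Y S) g"
  shows "continuous_map W X (\<lambda>w. fst (g w))"
    and "continuous_map (prod_topology W II) Y (\<lambda>(w, \<tau>). snd (g w) \<tau>)"
proof -
  show "continuous_map W X (\<lambda>w. fst (g w))"
    using continuous_map_compose[OF g continuous_map_fst_Ztop[OF S1]] by (simp add: o_def)
  have "continuous_map W (compact_open II Y) (\<lambda>w. snd (g w))"
    using continuous_map_compose[OF g continuous_map_snd_Ztop[OF S2]] by (simp add: o_def)
  from continuous_map_uncurry_compact_open[OF loc_cpt_I this]
  show "continuous_map (prod_topology W II) Y (\<lambda>(w, \<tau>). snd (g w) \<tau>)" .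
qed

lemma cont_into_Ztop_quotient:
  assumes pi: "continuous_map (simplex_top N) T \<pi>"
    and surj: "\<pi> ` standard_simplex N = topspace T"
    and H: "Hausdorff_space T"
    and g: "goodZ X Y S N (F \<circ> \<pi>)"
    and FS: "\<And>x. x \<in> topspace T \<Longrightarrow> F x \<in> S"
  shows "continuous_map T (Ztop X Y S) F"
  unfolding continuous_map_def
proof (intro conjI allI impI)
  show "F \<in> topspace T \<rightarrow> topspace (Ztop X Y S)" using FS by auto
  fix U assume U: "openin (Ztop X Y S) U"
  have cF: "continuous_map (simplex_top N) (Ztop X Y S) (F \<circ> \<pi>)" by (rule goodZ_imp_cont[OF g])
  have O: "openin (simplex_top N) {t \<in> topspace (simplex_top N). (F \<circ> \<pi>) t \<in> U}"
    using openin_continuous_map_preimage[OF cF U] .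
  have cs: "compact_space (simplex_top N)"
    unfolding simplex_top_def by (rule compact_space_subtopology[OF compactin_standard_simplex])
  have cm: "closed_map (simplex_top N) T \<pi>"
    by (rule continuous_imp_closed_map_gen[OF cs Hausdorff_imp_kc_space[OF H] pi])
  have C: "closedin (simplex_top N) (topspace (simplex_top N) - {t \<in> topspace (simplex_top N). (F \<circ> \<pi>) t \<in> U})"
    using closedin_diff[OF closedin_topspace O] .
  have C2: "closedin T (\<pi> ` (topspace (simplex_top N) - {t \<in> topspace (simplex_top N). (F \<circ> \<pi>) t \<in> U}))"
    using cm C unfolding closed_map_def by blast
  have eq: "{x \<in> topspace T. F x \<in> U} = topspace T - \<pi> ` (topspace (simplex_top N) - {t \<in> topspace (simplex_top N). (F \<circ> \<pi>) t \<in> U})"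
  proof
    show "{x \<in> topspace T. F x \<in> U} \<subseteq> topspace T - \<pi> ` (topspace (simplex_top N) - {t \<in> topspace (simplex_top N). (F \<circ> \<pi>) t \<in> U})"
    proof
      fix x assume "x \<in> {x \<in> topspace T. F x \<in> U}"
      then have a: "x \<in> topspace T" "F x \<in> U" by auto
      have "x \<notin> \<pi> ` (topspace (simplex_top N) - {t \<in> topspace (simplex_top N). (F \<circ> \<pi>) t \<in> U})"
      proof
        assume "x \<in> \<pi> ` (topspace (simplex_top N) - {t \<in> topspace (simplex_top N). (F \<circ> \<pi>) t \<in> U})"
        then obtain t where "t \<in> topspace (simplex_top N) - {t \<in> topspace (simplex_top N). (F \<circ> \<pi>) t \<in> U}" "x = \<pi> t"
          by blast
        then show False using a by simp
      qed
      then show "x \<in> topspace T - \<pi> ` (topspace (simplex_top N) - {t \<in> topspace (simplex_top N). (F \<circ> \<pi>) t \<in> U})"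
        using a by blast
    qed
    show "topspace T - \<pi> ` (topspace (simplex_top N) - {t \<in> topspace (simplex_top N). (F \<circ> \<pi>) t \<in> U}) \<subseteq> {x \<in> topspace T. F x \<in> U}"
    proof
      fix x assume x: "x \<in> topspace T - \<pi> ` (topspace (simplex_top N) - {t \<in> topspace (simplex_top N). (F \<circ> \<pi>) t \<in> U})"
      have "x \<in> topspace T" using x by (rule DiffD1)
      then have "x \<in> \<pi> ` standard_simplex N" by (simp add: surj)
      then obtain t where t: "t \<in> standard_simplex N" "x = \<pi> t" by (rule imageE) simp
      have "t \<in> topspace (simplex_top N)" using t by simp
      then have "(F \<circ> \<pi>) t \<in> U" using x t(2) by blast
      then show "x \<in> {x \<in> topspace T. F x \<in> U}" using x t by simp
    qed
  qed
  show "openin T {x \<in> topspace T. F x \<in> U}"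
    unfolding eq using C2 by (simp add: openin_diff)
qed



lemma sum_block_shift: "sum h {c..<c+k} = (\<Sum>j<k. h (c + j))" for c k :: nat
  by (induct k) (simp_all add: add.commute)

lemma sum_blocks:
  "(\<Sum>m<Suc a * Suc b. h m) = (\<Sum>i\<le>a. \<Sum>j\<le>b. h (i * Suc b + j))"
proof -
  have "(\<Sum>m<Suc a * Suc b. h m) = (\<Sum>i<Suc a. sum h {i * Suc b..<i * Suc b + Suc b})"
    by (rule sum.nat_group[symmetric])
  also have "\<dots> = (\<Sum>i<Suc a. \<Sum>j<Suc b. h (i * Suc b + j))"
    by (simp add: sum_block_shift)
  also have "\<dots> = (\<Sum>i\<le>a. \<Sum>j\<le>b. h (i * Suc b + j))"
    by (simp add: lessThan_Suc_atMost)
  finally show ?thesis .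
qed

definition pr_pi :: "nat \<Rightarrow> nat \<Rightarrow> (nat \<Rightarrow> real) \<Rightarrow> (nat \<Rightarrow> real) \<times> (nat \<Rightarrow> real)" where
  "pr_pi a b l = ((\<lambda>i. if i \<le> a then \<Sum>j\<le>b. l (i * Suc b + j) else 0),
                  (\<lambda>j. if j \<le> b then \<Sum>i\<le>a. l (i * Suc b + j) else 0))"

lemma atMost_pred_prod: "{..Suc a * Suc b - 1} = {..<Suc a * Suc b}"
  by auto

lemma idx_lt: "i \<le> a \<Longrightarrow> j \<le> b \<Longrightarrow> i * Suc b + j < Suc a * Suc b"
proof -
  assume "i \<le> a" "j \<le> b"
  then have "i * Suc b + j < i * Suc b + Suc b" by simp
  also have "\<dots> = Suc i * Suc b" by simp
  also have "\<dots> \<le> Suc a * Suc b" using \<open>i \<le> a\<close> by (intro mult_le_mono1) simp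
  finally show ?thesis .
qed

lemma pr_pi_simplex:
  assumes l: "l \<in> standard_simplex (Suc a * Suc b - 1)"
  shows "fst (pr_pi a b l) \<in> standard_simplex a" "snd (pr_pi a b l) \<in> standard_simplex b"
proof -
  have nn: "\<And>m. 0 \<le> l m" using l by (simp add: standard_simplex_def)
  have "sum l {..Suc a * Suc b - 1} = 1" using l unfolding standard_simplex_def by blast
  then have tot: "(\<Sum>m<Suc a * Suc b. l m) = 1" by (simp only: atMost_pred_prod)
  have tot2: "(\<Sum>i\<le>a. \<Sum>j\<le>b. l (i * Suc b + j)) = 1"
    using tot sum_blocks[where h=l and a=a and b=b] by simp
  have tot3: "(\<Sum>j\<le>b. \<Sum>i\<le>a. l (i * Suc b + j)) = 1"
    by (subst sum.swap) (rule tot2)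
  have le1: "(\<Sum>j\<le>b. l (i * Suc b + j)) \<le> 1" if "i \<le> a" for i
  proof -
    have "(\<Sum>j\<le>b. l (i * Suc b + j)) \<le> (\<Sum>i\<le>a. \<Sum>j\<le>b. l (i * Suc b + j))"
      using that by (intro member_le_sum) (auto intro: sum_nonneg nn)
    then show ?thesis using tot2 by simp
  qed
  have le2: "(\<Sum>i\<le>a. l (i * Suc b + j)) \<le> 1" if "j \<le> b" for j
  proof -
    have "(\<Sum>i\<le>a. l (i * Suc b + j)) \<le> (\<Sum>j\<le>b. \<Sum>i\<le>a. l (i * Suc b + j))"
      using that by (intro member_le_sum) (auto intro: sum_nonneg nn)
    then show ?thesis using tot3 by simp
  qed
  show "fst (pr_pi a b l) \<in> standard_simplex a"
    unfolding standard_simplex_def pr_pi_def using le1 tot2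
    by (auto intro: sum_nonneg nn)
  show "snd (pr_pi a b l) \<in> standard_simplex b"
    unfolding standard_simplex_def pr_pi_def using le2 tot3
    by (auto intro: sum_nonneg nn)
qed

lemma idx_div: "j \<le> b \<Longrightarrow> (i * Suc b + j) div Suc b = (i::nat)"
  by (metis add.commute div_mult_self1 div_less le_imp_less_Suc add_0 nat.distinct(1))
lemma idx_mod: "j \<le> b \<Longrightarrow> (i * Suc b + j) mod Suc b = (j::nat)"
  by (metis add.commute mod_mult_self1 mod_less le_imp_less_Suc)

lemma pr_pi_surj:
  assumes s: "s \<in> standard_simplex a" and w: "w \<in> standard_simplex b"
  shows "(s, w) \<in> pr_pi a b ` standard_simplex (Suc a * Suc b - 1)"
proof
  define l where "l = (\<lambda>m. if m < Suc a * Suc b then s (m div Suc b) * w (m mod Suc b) else 0)"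
  have lij: "l (i * Suc b + j) = s i * w j" if "i \<le> a" "j \<le> b" for i j
    using idx_lt[OF that] that unfolding l_def by (simp only: idx_div idx_mod if_True)
  have s1: "(\<Sum>i\<le>a. s i) = 1" and w1: "(\<Sum>j\<le>b. w j) = 1"
    using s w by (auto simp: standard_simplex_def)
  have sz: "\<And>i. i > a \<Longrightarrow> s i = 0" and wz: "\<And>j. j > b \<Longrightarrow> w j = 0"
    using s w by (auto simp: standard_simplex_def)
  have s01: "\<And>i. 0 \<le> s i \<and> s i \<le> 1" and w01: "\<And>j. 0 \<le> w j \<and> w j \<le> 1"
    using s w by (auto simp: standard_simplex_def)
  show "(s, w) = pr_pi a b l"
  proof -
    have "fst (pr_pi a b l) = s"
    proof
      fix i show "fst (pr_pi a b l) i = s i"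
      proof (cases "i \<le> a")
        case True
        then have "(\<Sum>j\<le>b. l (i * Suc b + j)) = (\<Sum>j\<le>b. s i * w j)"
          using lij[OF True] by (intro sum.cong) auto
        also have "\<dots> = s i" by (simp add: sum_distrib_left[symmetric] w1)
        finally show ?thesis using True by (simp add: pr_pi_def)
      qed (simp add: pr_pi_def sz)
    qed
    moreover have "snd (pr_pi a b l) = w"
    proof
      fix j show "snd (pr_pi a b l) j = w j"
      proof (cases "j \<le> b")
        case True
        then have "(\<Sum>i\<le>a. l (i * Suc b + j)) = (\<Sum>i\<le>a. s i * w j)"
          using lij True by (intro sum.cong) auto
        also have "\<dots> = w j" by (simp add: sum_distrib_right[symmetric] s1)
        finally show ?thesis using True by (simp add: pr_pi_def)
      qed (simp add: pr_pi_def wz)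
    qed
    ultimately show ?thesis by (metis prod.collapse)
  qed
  show "l \<in> standard_simplex (Suc a * Suc b - 1)"
    unfolding standard_simplex_def
  proof (intro CollectI conjI allI impI)
    fix m
    show "0 \<le> l m" using s01 w01 by (simp add: l_def)
    show "l m \<le> 1" using s01 w01 by (simp add: l_def mult_le_one)
  next
    fix m assume "Suc a * Suc b - 1 < m" then show "l m = 0" by (simp add: l_def)
  next
    have "(\<Sum>m\<le>Suc a * Suc b - 1. l m) = (\<Sum>m<Suc a * Suc b. l m)" by (simp only: atMost_pred_prod)
    also have "\<dots> = (\<Sum>i\<le>a. \<Sum>j\<le>b. l (i * Suc b + j))" by (rule sum_blocks)
    also have "\<dots> = (\<Sum>i\<le>a. \<Sum>j\<le>b. s i * w j)"
      using lij by (intro sum.cong refl) auto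
    also have "\<dots> = 1" by (simp add: sum_distrib_left[symmetric] w1 s1)
    finally show "(\<Sum>m\<le>Suc a * Suc b - 1. l m) = 1" .
  qed
qed

lemma continuous_map_simplex_coord:
  assumes "\<And>k. continuous_map T euclideanreal (\<lambda>x. f x k)"
    and "\<And>x. x \<in> topspace T \<Longrightarrow> f x \<in> standard_simplex n"
  shows "continuous_map T (simplex_top n) f"
  unfolding simplex_top_def
  using assms by (auto simp: continuous_map_in_subtopology continuous_map_componentwise_UNIV)

lemma continuous_map_simplex_proj:
  "continuous_map (simplex_top n) euclideanreal (\<lambda>x. x k)"
  unfolding simplex_top_def
  by (intro continuous_map_from_subtopology continuous_map_product_projection) simp

lemma pr_pi_cont:
  "continuous_map (simplex_top (Suc a * Suc b - 1)) (prod_topology (simplex_top a) (simplex_top b)) (pr_pi a b)"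
  unfolding continuous_map_pairwise
proof (intro conjI)
  show "continuous_map (simplex_top (Suc a * Suc b - 1)) (simplex_top a) (fst \<circ> pr_pi a b)"
  proof (rule continuous_map_simplex_coord)
    fix k show "continuous_map (simplex_top (Suc a * Suc b - 1)) euclideanreal (\<lambda>x. (fst \<circ> pr_pi a b) x k)"
      by (simp add: pr_pi_def continuous_map_simplex_proj continuous_map_sum)
  qed (use pr_pi_simplex in auto)
  show "continuous_map (simplex_top (Suc a * Suc b - 1)) (simplex_top b) (snd \<circ> pr_pi a b)"
  proof (rule continuous_map_simplex_coord)
    fix k show "continuous_map (simplex_top (Suc a * Suc b - 1)) euclideanreal (\<lambda>x. (snd \<circ> pr_pi a b) x k)"
      by (simp add: pr_pi_def continuous_map_simplex_proj continuous_map_sum)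
  qed (use pr_pi_simplex in auto)
qed

lemma pr_pi_image:
  "pr_pi a b ` standard_simplex (Suc a * Suc b - 1) = standard_simplex a \<times> standard_simplex b"
proof
  show "pr_pi a b ` standard_simplex (Suc a * Suc b - 1) \<subseteq> standard_simplex a \<times> standard_simplex b"
    using pr_pi_simplex by (metis image_subsetI mem_Times_iff)
  show "standard_simplex a \<times> standard_simplex b \<subseteq> pr_pi a b ` standard_simplex (Suc a * Suc b - 1)"
    using pr_pi_surj by auto
qed

lemma Hausdorff_simplex_top: "Hausdorff_space (simplex_top n)"
  unfolding simplex_top_def
  by (rule Hausdorff_space_subtopology) (metis Hausdorff_space_euclidean Hausdorff_space_product_topology)

lemma cont_prod_into_Ztop:
  assumes FS: "\<And>x. x \<in> standard_simplex a \<times> standard_simplex b \<Longrightarrow> F x \<in> S"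
    and c1: "continuous_map (prod_topology (simplex_top a) (simplex_top b)) X (\<lambda>x. fst (F x))"
    and c2: "continuous_map (prod_topology (prod_topology (simplex_top a) (simplex_top b)) II) Y
               (\<lambda>(x, \<tau>). snd (F x) \<tau>)"
  shows "continuous_map (prod_topology (simplex_top a) (simplex_top b)) (Ztop X Y S) F"
proof (rule cont_into_Ztop_quotient[OF pr_pi_cont])
  show "pr_pi a b ` standard_simplex (Suc a * Suc b - 1) = topspace (prod_topology (simplex_top a) (simplex_top b))"
    by (simp only: pr_pi_image topspace_prod_topology topspace_simplex_top)
  show "Hausdorff_space (prod_topology (simplex_top a) (simplex_top b))"
    by (simp add: Hausdorff_space_prod_topology Hausdorff_simplex_top)
  show "\<And>x. x \<in> topspace (prod_topology (simplex_top a) (simplex_top b)) \<Longrightarrow> F x \<in> S"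
    using FS by simp
  show "goodZ X Y S (Suc a * Suc b - 1) (F \<circ> pr_pi a b)"
    unfolding goodZ_def
  proof (intro conjI ballI)
    fix t assume "t \<in> standard_simplex (Suc a * Suc b - 1)"
    then have "pr_pi a b t \<in> standard_simplex a \<times> standard_simplex b"
      using pr_pi_simplex[of t a b] by (metis mem_Times_iff)
    then show "(F \<circ> pr_pi a b) t \<in> S" using FS by simp
  next
    show "continuous_map (simplex_top (Suc a * Suc b - 1)) X (\<lambda>t. fst ((F \<circ> pr_pi a b) t))"
      using continuous_map_compose[OF pr_pi_cont c1] by (simp add: o_def)
  next
    have pc: "continuous_map (prod_topology (simplex_top (Suc a * Suc b - 1)) II)
         (prod_topology (prod_topology (simplex_top a) (simplex_top b)) II) (\<lambda>(t, \<tau>). (pr_pi a b t, \<tau>))"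
      using pr_pi_cont by (subst continuous_map_prod_top) simp
    show "continuous_map (prod_topology (simplex_top (Suc a * Suc b - 1)) II) Y
        (\<lambda>(t, \<tau>). snd ((F \<circ> pr_pi a b) t) \<tau>)"
      using continuous_map_compose[OF pc c2] by (simp add: o_def case_prod_unfold)
  qed
qed



definition sh :: "nat \<Rightarrow> nat \<Rightarrow> nat" where
  "sh i j = (if j < i then j else Suc j)"

definition del :: "nat \<Rightarrow> (nat \<Rightarrow> real) \<Rightarrow> nat \<Rightarrow> real" where
  "del i s = (\<lambda>j. s (sh i j))"

lemma sh_image: "i \<le> n \<Longrightarrow> 1 \<le> n \<Longrightarrow> sh i ` {..n - 1} = {..n} - {i}"
proof
  assume a: "i \<le> n" "1 \<le> n"
  show "sh i ` {..n - 1} \<subseteq> {..n} - {i}" using a by (auto simp: sh_def)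
  show "{..n} - {i} \<subseteq> sh i ` {..n - 1}"
  proof
    fix m assume m: "m \<in> {..n} - {i}"
    show "m \<in> sh i ` {..n - 1}"
    proof (cases "m < i")
      case True
      then have "sh i m = m" "m \<le> n - 1" using a by (auto simp: sh_def)
      then show ?thesis by (metis atMost_iff imageI)
    next
      case False
      then have "m > i" using m by auto
      then have "sh i (m - 1) = m" "m - 1 \<le> n - 1" using m by (auto simp: sh_def)
      then show ?thesis by (metis atMost_iff imageI)
    qed
  qed
qed

lemma inj_sh: "inj (sh i)"
  by (auto simp: inj_def sh_def split: if_splits)

lemma del_simplex:
  assumes s: "s \<in> standard_simplex n" and i: "i \<le> n" and z: "s i = 0"
  shows "del i s \<in> standard_simplex (n - 1)"
proof (cases "n = 0")
  case True
  then have "s 0 = 1" using s by (simp add: standard_simplex_def)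
  then show ?thesis using z i True by simp
next
  case False
  then have n1: "1 \<le> n" by simp
  have s01: "\<And>j. 0 \<le> s j \<and> s j \<le> 1" and sz: "\<And>j. j > n \<Longrightarrow> s j = 0" and ss: "sum s {..n} = 1"
    using s by (auto simp: standard_simplex_def)
  have "(\<Sum>j\<le>n - 1. del i s j) = sum s (sh i ` {..n - 1})"
    unfolding del_def by (simp add: sum.reindex inj_on_subset[OF inj_sh])
  also have "\<dots> = sum s ({..n} - {i})" using sh_image[OF i n1] by simp
  also have "\<dots> = sum s {..n} - s i" using i by (simp add: sum_diff1)
  also have "\<dots> = 1" using ss z by simp
  finally have sum1: "(\<Sum>j\<le>n - 1. del i s j) = 1" .
  show ?thesis
    unfolding standard_simplex_def
  proof (intro CollectI conjI allI impI)
    fix j show "0 \<le> del i s j" "del i s j \<le> 1" using s01 by (auto simp: del_def)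
  next
    fix j assume "n - 1 < j" then show "del i s j = 0"
      using sz i by (auto simp: del_def sh_def)
  qed (rule sum1)
qed

lemma face_del: "s i = 0 \<Longrightarrow> simplical_face i (del i s) = s"
  by (rule ext) (auto simp: simplical_face_def del_def sh_def)

lemma del_face: "del i (simplical_face i u) = u"
  by (rule ext) (auto simp: simplical_face_def del_def sh_def)

lemma face_zero: "simplical_face i u i = 0"
  by (simp add: simplical_face_def)

lemma del_del: "i < j \<Longrightarrow> del (j - 1) (del i s) = del i (del j s)"
  by (rule ext) (auto simp: del_def sh_def)

lemma del_coord: "i < j \<Longrightarrow> del j s i = s i"
  by (simp add: del_def sh_def)

lemma del_coord2: "i < j \<Longrightarrow> del i s (j - 1) = s j"
proof -
  assume a: "i < j"
  then have "\<not> (j - 1 < i)" "Suc (j - 1) = j" by arith+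
  then show ?thesis by (simp add: del_def sh_def)
qed

lemma continuous_map_del:
  assumes "\<And>s. s \<in> topspace T \<Longrightarrow> del i s \<in> standard_simplex m"
    and "\<And>j. continuous_map T euclideanreal (\<lambda>s. s j)"
  shows "continuous_map T (simplex_top m) (del i)"
  by (rule continuous_map_simplex_coord) (use assms in \<open>auto simp: del_def\<close>)

definition mn :: "nat \<Rightarrow> nat \<Rightarrow> (nat \<Rightarrow> real) \<Rightarrow> real" where
  "mn n k s = Min ((\<lambda>i. s i) ` ({..n} - {k}))"

definition vv :: "nat \<Rightarrow> nat \<Rightarrow> nat \<Rightarrow> real" where
  "vv n k i = (if i = k then - real n else if i \<le> n then 1 else 0)"

definition rho :: "nat \<Rightarrow> nat \<Rightarrow> (nat \<Rightarrow> real) \<Rightarrow> nat \<Rightarrow> real" where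
  "rho n k s = (\<lambda>i. s i - mn n k s * vv n k i)"

definition hornset :: "nat \<Rightarrow> nat \<Rightarrow> (nat \<Rightarrow> real) set" where
  "hornset n k = {s \<in> standard_simplex n. \<exists>i\<le>n. i \<noteq> k \<and> s i = 0}"

lemma ne_idx: "1 \<le> n \<Longrightarrow> k \<le> n \<Longrightarrow> {..n} - {k::nat} \<noteq> {}"
proof (cases "k = 0")
  case True
  assume "1 \<le> n"
  then have "n \<in> {..n} - {k}" using True by auto
  then show ?thesis by blast
next
  case False
  then have "0 \<in> {..n} - {k}" by auto
  then show ?thesis by blast
qed

lemma mn_le: "i \<le> n \<Longrightarrow> i \<noteq> k \<Longrightarrow> mn n k s \<le> s i"
  unfolding mn_def by (rule Min_le) auto

lemma mn_ex:
  assumes "1 \<le> n" "k \<le> n"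
  shows "\<exists>i\<le>n. i \<noteq> k \<and> s i = mn n k s"
proof -
  have "mn n k s \<in> (\<lambda>i. s i) ` ({..n} - {k})"
    unfolding mn_def by (rule Min_in) (use ne_idx[OF assms] in auto)
  then show ?thesis by force
qed

lemma simplex_props:
  assumes "s \<in> standard_simplex n"
  shows "\<And>i. 0 \<le> s i" "\<And>i. s i \<le> 1" "\<And>i. i > n \<Longrightarrow> s i = 0" "sum s {..n} = 1"
  using assms by (auto simp: standard_simplex_def)

lemma mn_nonneg:
  assumes "s \<in> standard_simplex n" "1 \<le> n" "k \<le> n"
  shows "0 \<le> mn n k s"
  using mn_ex[OF assms(2,3), of s] simplex_props(1)[OF assms(1)] by metis

lemma card_diff_k: "k \<le> n \<Longrightarrow> card ({..n} - {k}) = n"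
  by simp

lemma mn_bound:
  assumes s: "s \<in> standard_simplex n" and n: "1 \<le> n" and k: "k \<le> n"
  shows "real n * mn n k s + s k \<le> 1"
proof -
  have "real n * mn n k s = (\<Sum>i\<in>{..n} - {k}. mn n k s)"
    using card_diff_k[OF k] by simp
  also have "\<dots> \<le> (\<Sum>i\<in>{..n} - {k}. s i)"
    by (intro sum_mono mn_le) auto
  also have "\<dots> = sum s {..n} - s k" using k by (simp add: sum_diff1)
  also have "\<dots> = 1 - s k" using simplex_props(4)[OF s] by simp
  finally show ?thesis by simp
qed

lemma mn_le1:
  assumes s: "s \<in> standard_simplex n" and n: "1 \<le> n" and k: "k \<le> n"
  shows "mn n k s \<le> 1"
proof -
  have m0: "0 \<le> mn n k s" by (rule mn_nonneg[OF s n k])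
  have "mn n k s \<le> real n * mn n k s" using n m0
    by (metis mult_le_cancel_right1 of_nat_1 of_nat_mono order.refl mult.commute mult_right_mono mult_1 )
  also have "\<dots> \<le> 1 - s k" using mn_bound[OF s n k] by simp
  also have "\<dots> \<le> 1" using simplex_props(1)[OF s] by simp
  finally show ?thesis .
qed

lemma sum_vv: "k \<le> n \<Longrightarrow> (\<Sum>i\<le>n. vv n k i) = 0"
proof -
  assume k: "k \<le> n"
  have "(\<Sum>i\<le>n. vv n k i) = vv n k k + (\<Sum>i\<in>{..n} - {k}. vv n k i)"
    using k by (simp add: sum.remove)
  also have "(\<Sum>i\<in>{..n} - {k}. vv n k i) = (\<Sum>i\<in>{..n} - {k}. 1)"
    by (rule sum.cong) (auto simp: vv_def)
  also have "\<dots> = real n" using card_diff_k[OF k] by simp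
  finally show ?thesis by (simp add: vv_def)
qed

lemma shift_simplex:
  assumes s: "s \<in> standard_simplex n" and n: "1 \<le> n" and k: "k \<le> n"
    and mu: "0 \<le> \<mu>" "\<mu> \<le> mn n k s"
  shows "(\<lambda>i. s i - \<mu> * vv n k i) \<in> standard_simplex n"
  unfolding standard_simplex_def
proof (intro CollectI conjI allI impI)
  have b: "real n * mn n k s + s k \<le> 1" by (rule mn_bound[OF s n k])
  have nm: "real n * \<mu> \<le> real n * mn n k s" using mu by (simp add: mult_left_mono)
  fix i
  show "0 \<le> s i - \<mu> * vv n k i"
  proof (cases "i = k")
    case True then show ?thesis using simplex_props(1)[OF s, of i] mu by (simp add: vv_def)
  next
    case False
    then show ?thesis
    proof (cases "i \<le> n")
      case True
      then show ?thesis using mn_le[OF True False, of s] mu \<open>i \<noteq> k\<close> by (simp add: vv_def)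
    qed (simp add: vv_def simplex_props(1)[OF s])
  qed
  show "s i - \<mu> * vv n k i \<le> 1"
  proof (cases "i = k")
    case True then show ?thesis using b nm by (simp add: vv_def mult.commute)
  next
    case False
    then show ?thesis using simplex_props(2)[OF s, of i] mu by (simp add: vv_def)
  qed
next
  fix i assume "n < i" then show "s i - \<mu> * vv n k i = 0"
    using simplex_props(3)[OF s] k by (simp add: vv_def)
next
  have "(\<Sum>i\<le>n. s i - \<mu> * vv n k i) = sum s {..n} - \<mu> * (\<Sum>i\<le>n. vv n k i)"
    by (simp add: sum_subtractf sum_distrib_left)
  then show "(\<Sum>i\<le>n. s i - \<mu> * vv n k i) = 1"
    using simplex_props(4)[OF s] sum_vv[OF k] by simp
qed

lemma rho_simplex:
  assumes s: "s \<in> standard_simplex n" and n: "1 \<le> n" and k: "k \<le> n"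
  shows "rho n k s \<in> standard_simplex n"
  unfolding rho_def by (rule shift_simplex[OF s n k mn_nonneg[OF s n k]]) simp

lemma rho_horn:
  assumes s: "s \<in> standard_simplex n" and n: "1 \<le> n" and k: "k \<le> n"
  shows "rho n k s \<in> hornset n k"
proof -
  obtain i where i: "i \<le> n" "i \<noteq> k" "s i = mn n k s" using mn_ex[OF n k] by blast
  then have "rho n k s i = 0" by (simp add: rho_def vv_def)
  then show ?thesis using i rho_simplex[OF s n k] by (auto simp: hornset_def)
qed

lemma horn_mn:
  assumes s: "s \<in> hornset n k" and n: "1 \<le> n" and k: "k \<le> n"
  shows "mn n k s = 0"
proof -
  obtain i where i: "i \<le> n" "i \<noteq> k" "s i = 0" and sS: "s \<in> standard_simplex n"
    using s by (auto simp: hornset_def)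
  show ?thesis using mn_le[OF i(1,2), of s] i(3) mn_nonneg[OF sS n k] by simp
qed

lemma rho_id:
  assumes s: "s \<in> hornset n k" and n: "1 \<le> n" and k: "k \<le> n"
  shows "rho n k s = s"
  using horn_mn[OF assms] by (simp add: rho_def)

lemma continuous_map_Min_real:
  assumes "finite I" "I \<noteq> {}" "\<And>i. i \<in> I \<Longrightarrow> continuous_map T euclideanreal (f i)"
  shows "continuous_map T euclideanreal (\<lambda>x. Min ((\<lambda>i. f i x) ` I))"
  using assms
proof (induction I rule: finite_ne_induct)
  case (singleton i)
  then show ?case by simp
next
  case (insert i F)
  have "(\<lambda>x. Min ((\<lambda>i. f i x) ` insert i F)) = (\<lambda>x. min (f i x) (Min ((\<lambda>i. f i x) ` F)))"
    using insert.hyps by (simp add: Min_insert)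
  moreover have "continuous_map T euclideanreal (\<lambda>x. min (f i x) (Min ((\<lambda>i. f i x) ` F)))"
    using insert by (intro continuous_map_real_min) auto
  ultimately show ?case by simp
qed

lemma continuous_map_mn:
  assumes "1 \<le> n" "k \<le> n" "\<And>j. continuous_map T euclideanreal (\<lambda>s. s j)"
  shows "continuous_map T euclideanreal (mn n k)"
  unfolding mn_def
  by (rule continuous_map_Min_real[where f = "\<lambda>i s. s i"]) (use assms ne_idx in auto)

lemma continuous_map_rho:
  assumes n: "1 \<le> n" and k: "k \<le> n"
  shows "continuous_map (simplex_top n) (subtopology (simplex_top n) (hornset n k)) (rho n k)"
proof -
  have c: "continuous_map (simplex_top n) (simplex_top n) (rho n k)"
  proof (rule continuous_map_simplex_coord)
    fix j
    have "continuous_map (simplex_top n) euclideanreal (mn n k)"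
      by (rule continuous_map_mn[OF n k continuous_map_simplex_proj])
    then show "continuous_map (simplex_top n) euclideanreal (\<lambda>x. rho n k x j)"
      unfolding rho_def
      by (intro continuous_map_diff continuous_map_real_mult continuous_map_simplex_proj) auto
  qed (use rho_simplex[OF _ n k] in simp)
  then show ?thesis
    using rho_horn[OF _ n k] by (simp add: continuous_map_in_subtopology image_subset_iff)
qed



lemma singular_simplex_iff:
  "singular_simplex p X f \<longleftrightarrow> continuous_map (simplex_top p) X f \<and> f \<in> extensional (standard_simplex p)"
  by (simp add: singular_simplex_def simplex_top_def)

lemma topspace_fms:
  "topspace (filtered_mapping_space A \<psi> Z \<phi>) =
     {g. continuous_map A Z g \<and> g \<in> extensional (topspace A) \<and> filtered_map A \<psi> Z \<phi> g}"
  unfolding filtered_mapping_space_def mapping_space_def by (auto simp: topspace_compact_open)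

lemma cont_fms:
  "continuous_map (simplex_top m) (filtered_mapping_space A \<psi> Z \<phi>) g \<longleftrightarrow>
   continuous_map (simplex_top m) (compact_open A Z) g \<and> (\<forall>t\<in>standard_simplex m. filtered_map A \<psi> Z \<phi> (g t))"
  unfolding filtered_mapping_space_def mapping_space_def
  by (auto simp: continuous_map_simplex_dtop continuous_map_in_subtopology)

lemma compat_del:
  assumes hc: "\<forall>i j. i < j \<longrightarrow> j \<le> n \<longrightarrow> i \<noteq> k \<longrightarrow> j \<noteq> k \<longrightarrow>
            singular_face (n - 1) i (x j) = singular_face (n - 1) (j - 1) (x i)"
    and s: "s \<in> standard_simplex n" and si: "s i = 0" and sj: "s j = 0"
    and ij: "i < j" "j \<le> n" "i \<noteq> k" "j \<noteq> k"
  shows "x j (del j s) = x i (del i s)"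
proof -
  define u where "u = del i (del j s)"
  have dj: "del j s \<in> standard_simplex (n - 1)" by (rule del_simplex[OF s ij(2) sj])
  have dji: "del j s i = 0" using del_coord[OF ij(1)] si by simp
  have u: "u \<in> standard_simplex (n - 1 - 1)"
    unfolding u_def by (rule del_simplex[OF dj _ dji]) (use ij in simp)
  have u': "u \<in> standard_simplex (n - 1 - Suc 0)" using u by simp
  have f1: "simplical_face i u = del j s" unfolding u_def by (rule face_del[where s="del j s", OF dji])
  have dij: "del i s (j - 1) = 0" using del_coord2[OF ij(1)] sj by simp
  have f2: "simplical_face (j - 1) u = del i s"
    unfolding u_def del_del[OF ij(1), symmetric] by (rule face_del[where s="del i s", OF dij])
  have "x j (del j s) = singular_face (n - 1) i (x j) u"
    using u' f1 by (simp add: singular_face_def)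
  also have "\<dots> = singular_face (n - 1) (j - 1) (x i) u" using hc ij by simp
  also have "\<dots> = x i (del i s)"
    using u' f2 by (simp add: singular_face_def)
  finally show ?thesis .
qed

lemma horn_glue:
  assumes n: "1 \<le> n" and k: "k \<le> n"
    and xc: "\<And>i. i \<le> n \<Longrightarrow> i \<noteq> k \<Longrightarrow> continuous_map (simplex_top (n - 1)) Q (x i)"
    and hc: "\<forall>i j. i < j \<longrightarrow> j \<le> n \<longrightarrow> i \<noteq> k \<longrightarrow> j \<noteq> k \<longrightarrow>
            singular_face (n - 1) i (x j) = singular_face (n - 1) (j - 1) (x i)"
  obtains h where "continuous_map (subtopology (simplex_top n) (hornset n k)) Q h"
    "\<And>r i. r \<in> hornset n k \<Longrightarrow> i \<le> n \<Longrightarrow> i \<noteq> k \<Longrightarrow> r i = 0 \<Longrightarrow> h r = x i (del i r)"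
proof -
  define HT where "HT = subtopology (simplex_top n) (hornset n k)"
  define T where "T = (\<lambda>i. {r \<in> hornset n k. r i = (0::real)})"
  have tHT: "topspace HT = hornset n k"
    unfolding HT_def by (auto simp: hornset_def)
  have proj: "\<And>j. continuous_map HT euclideanreal (\<lambda>s. s j)"
    unfolding HT_def by (intro continuous_map_from_subtopology continuous_map_simplex_proj)
  obtain h where h1: "continuous_map HT Q h"
    and h2: "\<And>r i. i \<in> {..n} - {k} \<Longrightarrow> r \<in> topspace HT \<inter> T i \<Longrightarrow> h r = x i (del i r)"
  proof (rule pasting_lemma_exists_closed[of "{..n} - {k}" HT T Q "\<lambda>i r. x i (del i r)"])
    show "finite ({..n} - {k})" by simp
    show "topspace HT \<subseteq> \<Union> (T ` ({..n} - {k}))"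
      unfolding tHT T_def hornset_def by auto
  next
    fix i assume "i \<in> {..n} - {k}"
    have "closedin HT {r \<in> topspace HT. r i \<in> {0}}"
      by (rule closedin_continuous_map_preimage[OF proj]) simp
    moreover have "{r \<in> topspace HT. r i \<in> {0}} = T i" unfolding tHT T_def by auto
    ultimately show "closedin HT (T i)" by simp
  next
    fix i assume i: "i \<in> {..n} - {k}"
    have "continuous_map (subtopology HT (T i)) (simplex_top (n - 1)) (del i)"
    proof (rule continuous_map_del)
      fix s assume "s \<in> topspace (subtopology HT (T i))"
      then have "s \<in> standard_simplex n" "s i = 0" using tHT unfolding T_def hornset_def by auto
      then show "del i s \<in> standard_simplex (n - 1)" using del_simplex i by auto
    next
      fix j show "continuous_map (subtopology HT (T i)) euclideanreal (\<lambda>s. s j)"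
        by (intro continuous_map_from_subtopology proj)
    qed
    then show "continuous_map (subtopology HT (T i)) Q (\<lambda>r. x i (del i r))"
      using continuous_map_compose[OF _ xc] i by (auto simp: o_def)
  next
    fix i j r assume ij: "i \<in> {..n} - {k}" "j \<in> {..n} - {k}" "r \<in> topspace HT \<inter> T i \<inter> T j"
    then have r: "r \<in> standard_simplex n" "r i = 0" "r j = 0" unfolding tHT T_def hornset_def by auto
    consider "i < j" | "i = j" | "j < i" by arith
    then show "x i (del i r) = x j (del j r)"
    proof cases
      case 1 then show ?thesis using compat_del[OF hc r(1) r(2) r(3)] ij by auto
    next
      case 3 then show ?thesis using compat_del[OF hc r(1) r(3) r(2)] ij by auto
    qed simp
  qed blast
  show ?thesis
  proof (rule that)
    show "continuous_map (subtopology (simplex_top n) (hornset n k)) Q h" using h1 unfolding HT_def .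
    fix r i assume "r \<in> hornset n k" "i \<le> n" "i \<noteq> k" "r i = 0"
    then show "h r = x i (del i r)" using h2[of i r] tHT unfolding T_def by auto
  qed
qed

definition pathS :: "'a topology \<Rightarrow> ('a \<Rightarrow> 'p \<Rightarrow> real) \<Rightarrow> 'b topology \<Rightarrow> ('b \<Rightarrow> 'p \<Rightarrow> real)
    \<Rightarrow> ('a \<Rightarrow> 'b) \<Rightarrow> ('a \<times> (real \<Rightarrow> 'b)) set" where
  "pathS X \<phi>X Y \<phi>Y f = {z. fst z \<in> topspace X \<and> continuous_map II Y (snd z) \<and> snd z \<in> extensional {0..1}
      \<and> snd z 0 = f (fst z) \<and> (\<forall>\<tau>\<in>{0..1}. \<phi>Y (snd z \<tau>) = \<phi>X (fst z))}"

lemma pathS_props: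
  assumes "z \<in> pathS X \<phi>X Y \<phi>Y f"
  shows "fst z \<in> topspace X" "continuous_map II Y (snd z)" "snd z \<in> extensional {0..1}"
    "snd z 0 = f (fst z)" "\<And>\<tau>. \<tau> \<in> {0..1} \<Longrightarrow> \<phi>Y (snd z \<tau>) = \<phi>X (fst z)"
  using assms by (auto simp: pathS_def)



lemma cm_in: "continuous_map X Y f \<Longrightarrow> x \<in> topspace X \<Longrightarrow> f x \<in> topspace Y"
  by (meson continuous_map_image_subset_topspace image_subset_iff)

lemma kan_lift:
  fixes x :: "nat \<Rightarrow> (nat \<Rightarrow> real) \<Rightarrow> (nat \<Rightarrow> real) \<Rightarrow> 'a \<times> (real \<Rightarrow> 'b)"
    and y :: "(nat \<Rightarrow> real) \<Rightarrow> (nat \<Rightarrow> real) \<Rightarrow> 'b"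
    and \<psi> :: "(nat \<Rightarrow> real) \<Rightarrow> 'p::order \<Rightarrow> real"
    and X :: "'a topology" and \<phi>X :: "'a \<Rightarrow> 'p \<Rightarrow> real"
    and Y :: "'b topology" and \<phi>Y :: "'b \<Rightarrow> 'p \<Rightarrow> real" and f :: "'a \<Rightarrow> 'b" and c :: nat
  defines "S \<equiv> pathS X \<phi>X Y \<phi>Y f"
  defines "M \<equiv> filtered_mapping_space (simplex_top c) \<psi> (Ztop X Y S) (\<lambda>z. \<phi>X (fst z))"
      and "N \<equiv> filtered_mapping_space (simplex_top c) \<psi> Y \<phi>Y"
      and "qq \<equiv> postcomp (simplex_top c) (\<lambda>z. snd z (1::real))"
  assumes n: "1 \<le> n" and k: "k \<le> n"
    and hx: "\<forall>i\<le>n. i \<noteq> k \<longrightarrow> singular_simplex (n - 1) M (x i)"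
    and hc: "\<forall>i j. i < j \<longrightarrow> j \<le> n \<longrightarrow> i \<noteq> k \<longrightarrow> j \<noteq> k \<longrightarrow>
            singular_face (n - 1) i (x j) = singular_face (n - 1) (j - 1) (x i)"
    and hy: "singular_simplex n N y"
    and hf: "\<forall>i\<le>n. i \<noteq> k \<longrightarrow> singular_face n i y = sing_map (n - 1) qq (x i)"
  shows "\<exists>z. singular_simplex n M z \<and> (\<forall>i\<le>n. i \<noteq> k \<longrightarrow> singular_face n i z = x i)
             \<and> sing_map n qq z = y"
proof -
  let ?Z = "Ztop X Y S"
  let ?A = "simplex_top c"
  let ?CO = "compact_open ?A ?Z"
  let ?P = "prod_topology (simplex_top n) ?A"
  let ?XX = "prod_topology ?P II"
  have S1: "\<And>z. z \<in> S \<Longrightarrow> fst z \<in> topspace X"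
    unfolding S_def by (rule pathS_props(1))
  have S2: "\<And>z. z \<in> S \<Longrightarrow> continuous_map II Y (snd z) \<and> snd z \<in> extensional {0..1}"
    unfolding S_def using pathS_props(2,3) by metis
  have S3: "\<And>z. z \<in> S \<Longrightarrow> snd z 0 = f (fst z)"
    unfolding S_def by (rule pathS_props(4))
  have S4: "\<And>z \<tau>. z \<in> S \<Longrightarrow> \<tau> \<in> {0..1} \<Longrightarrow> \<phi>Y (snd z \<tau>) = \<phi>X (fst z)"
    unfolding S_def by (rule pathS_props(5))
  have xc: "\<And>i. i \<le> n \<Longrightarrow> i \<noteq> k \<Longrightarrow> continuous_map (simplex_top (n - 1)) ?CO (x i)"
    using hx unfolding M_def singular_simplex_iff cont_fms by blast
  have xf: "\<And>i u. i \<le> n \<Longrightarrow> i \<noteq> k \<Longrightarrow> u \<in> standard_simplex (n - 1) \<Longrightarrow>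
      filtered_map ?A \<psi> ?Z (\<lambda>z. \<phi>X (fst z)) (x i u)"
    using hx unfolding M_def singular_simplex_iff cont_fms by blast
  have xe: "\<And>i. i \<le> n \<Longrightarrow> i \<noteq> k \<Longrightarrow> x i \<in> extensional (standard_simplex (n - 1))"
    using hx unfolding singular_simplex_iff by blast
  have xt: "\<And>i u. i \<le> n \<Longrightarrow> i \<noteq> k \<Longrightarrow> u \<in> standard_simplex (n - 1) \<Longrightarrow> x i u \<in> topspace ?CO"
    using xc cm_in by (metis topspace_simplex_top)
  have yc: "continuous_map (simplex_top n) (compact_open ?A Y) y"
    using hy unfolding N_def singular_simplex_iff cont_fms by blast
  have yf: "\<And>s. s \<in> standard_simplex n \<Longrightarrow> filtered_map ?A \<psi> Y \<phi>Y (y s)"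
    using hy unfolding N_def singular_simplex_iff cont_fms by blast
  have ye: "y \<in> extensional (standard_simplex n)"
    using hy unfolding singular_simplex_iff by blast
  have yt: "\<And>s. s \<in> standard_simplex n \<Longrightarrow> y s \<in> extensional (standard_simplex c)"
    using yc cm_in by (metis (no_types, lifting) mem_Collect_eq topspace_compact_open topspace_simplex_top)
  obtain h where hcont: "continuous_map (subtopology (simplex_top n) (hornset n k)) ?CO h"
    and heq: "\<And>r i. r \<in> hornset n k \<Longrightarrow> i \<le> n \<Longrightarrow> i \<noteq> k \<Longrightarrow> r i = 0 \<Longrightarrow> h r = x i (del i r)"
    using horn_glue[OF n k xc hc] by blast
  have hval: "\<And>r. r \<in> hornset n k \<Longrightarrow> \<exists>i\<le>n. i \<noteq> k \<and> h r = x i (del i r)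
       \<and> del i r \<in> standard_simplex (n - 1) \<and> simplical_face i (del i r) = r"
  proof -
    fix r assume r: "r \<in> hornset n k"
    then obtain i where i: "i \<le> n" "i \<noteq> k" "r i = 0" and rS: "r \<in> standard_simplex n"
      by (auto simp: hornset_def)
    show "\<exists>i\<le>n. i \<noteq> k \<and> h r = x i (del i r) \<and> del i r \<in> standard_simplex (n - 1) \<and> simplical_face i (del i r) = r"
      using heq[OF r i(1,2,3)] del_simplex[OF rS i(1) i(3)] face_del[where s=r, OF i(3)] i by blast
  qed
  have hS: "\<And>r w. r \<in> hornset n k \<Longrightarrow> w \<in> standard_simplex c \<Longrightarrow> h r w \<in> S \<and> \<phi>X (fst (h r w)) = \<psi> w"
  proof -
    fix r w assume r: "r \<in> hornset n k" and w: "w \<in> standard_simplex c"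
    obtain i where i: "i \<le> n" "i \<noteq> k" "h r = x i (del i r)" "del i r \<in> standard_simplex (n - 1)"
      using hval[OF r] by blast
    have fm: "filtered_map ?A \<psi> ?Z (\<lambda>z. \<phi>X (fst z)) (x i (del i r))" by (rule xf[OF i(1,2,4)])
    then have "x i (del i r) w \<in> S" using w unfolding filtered_map_def
      by (metis cm_in topspace_Ztop topspace_simplex_top)
    moreover have "\<phi>X (fst (x i (del i r) w)) = \<psi> w" using fm w unfolding filtered_map_def by simp
    ultimately show "h r w \<in> S \<and> \<phi>X (fst (h r w)) = \<psi> w" using i(3) by simp
  qed
  have hY: "\<And>r w. r \<in> hornset n k \<Longrightarrow> w \<in> standard_simplex c \<Longrightarrow> snd (h r w) 1 = y r w"
  proof -
    fix r w assume r: "r \<in> hornset n k" and w: "w \<in> standard_simplex c"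
    obtain i where i: "i \<le> n" "i \<noteq> k" "h r = x i (del i r)" "del i r \<in> standard_simplex (n - 1)"
      "simplical_face i (del i r) = r"
      using hval[OF r] by blast
    have "y r = singular_face n i y (del i r)" using i(4,5) by (simp add: singular_face_def)
    also have "\<dots> = sing_map (n - 1) qq (x i) (del i r)" using hf i by simp
    also have "\<dots> = qq (x i (del i r))" using i(4) by (simp add: sing_map_def)
    finally have "y r w = qq (x i (del i r)) w" by simp
    then show "snd (h r w) 1 = y r w" using w i(3) by (simp add: qq_def postcomp_def)
  qed
  define H0 where "H0 = h \<circ> rho n k"
  have H0c: "continuous_map (simplex_top n) ?CO H0"
    unfolding H0_def by (rule continuous_map_compose[OF continuous_map_rho[OF n k] hcont])
  have H0h: "\<And>s. s \<in> standard_simplex n \<Longrightarrow> H0 s = h (rho n k s) \<and> rho n k s \<in> hornset n k"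
    unfolding H0_def using rho_horn[OF _ n k] by simp
  have H0S: "\<And>s w. s \<in> standard_simplex n \<Longrightarrow> w \<in> standard_simplex c \<Longrightarrow>
      H0 s w \<in> S \<and> \<phi>X (fst (H0 s w)) = \<psi> w"
    using H0h hS by metis
  have U0: "continuous_map ?P ?Z (\<lambda>(s, w). H0 s w)"
    by (rule continuous_map_uncurry_compact_open[OF loc_cpt_simplex H0c])
  have A1: "continuous_map ?P X (\<lambda>p. fst (H0 (fst p) (snd p)))"
    using cont_into_Ztop_imp(1)[OF S1 S2 U0] by (simp add: case_prod_unfold)
  have A2: "continuous_map (prod_topology ?P II) Y (\<lambda>(p, \<tau>). snd (H0 (fst p) (snd p)) \<tau>)"
    using cont_into_Ztop_imp(2)[OF S1 S2 U0] by (simp add: case_prod_unfold)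
  have Y0: "continuous_map ?P Y (\<lambda>p. y (fst p) (snd p))"
    using continuous_map_uncurry_compact_open[OF loc_cpt_simplex yc] by (simp add: case_prod_unfold)

  have tXX: "\<And>x. x \<in> topspace ?XX \<Longrightarrow> fst (fst x) \<in> standard_simplex n \<and> snd (fst x) \<in> standard_simplex c \<and> snd x \<in> {0..1}"
    by auto
  have cff: "continuous_map ?XX (simplex_top n) (\<lambda>x. fst (fst x))"
    using continuous_map_compose[OF continuous_map_fst[of ?P II] continuous_map_fst[of "simplex_top n" ?A]]
    by (simp add: o_def)
  have csf: "continuous_map ?XX ?A (\<lambda>x. snd (fst x))"
    using continuous_map_compose[OF continuous_map_fst[of ?P II] continuous_map_snd[of "simplex_top n" ?A]]
    by (simp add: o_def)
  have pj1: "\<And>i. continuous_map ?XX euclideanreal (\<lambda>x. fst (fst x) i)"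
    using continuous_map_compose[OF cff continuous_map_simplex_proj] by (simp add: o_def)
  have ptau: "continuous_map ?XX euclideanreal snd"
    using continuous_map_into_fulltopology[OF continuous_map_snd[of ?P II]] .
  have mnc: "continuous_map ?XX euclideanreal (\<lambda>x. mn n k (fst (fst x)))"
    using continuous_map_compose[OF cff continuous_map_mn[OF n k continuous_map_simplex_proj]]
    by (simp add: o_def)
  have mn01: "\<And>s. s \<in> standard_simplex n \<Longrightarrow> 0 \<le> mn n k s \<and> mn n k s \<le> 1"
    using mn_nonneg[OF _ n k] mn_le1[OF _ n k] by blast
  define pp where "pp = (\<lambda>x::((nat\<Rightarrow>real)\<times>(nat\<Rightarrow>real))\<times>real. 2 * (1 - snd x))"
  define qm where "qm = (\<lambda>x::((nat\<Rightarrow>real)\<times>(nat\<Rightarrow>real))\<times>real. mn n k (fst (fst x)))"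
  define f1 where "f1 = (\<lambda>x::((nat\<Rightarrow>real)\<times>(nat\<Rightarrow>real))\<times>real.
      y (\<lambda>i. fst (fst x) i - 2 * (1 - snd x) * vv n k i) (snd (fst x)))"
  define g1 where "g1 = (\<lambda>x::((nat\<Rightarrow>real)\<times>(nat\<Rightarrow>real))\<times>real.
      snd (H0 (fst (fst x)) (snd (fst x))) (snd x / (1 - mn n k (fst (fst x)) / 2)))"
  define G where "G = (\<lambda>x. if pp x \<le> qm x then f1 x else g1 x)"
  have Gc: "continuous_map ?XX Y G"
    unfolding G_def
  proof (rule continuous_map_cases_le)
    show "continuous_map ?XX euclideanreal pp"
      unfolding pp_def by (intro continuous_intros ptau)
    show "continuous_map ?XX euclideanreal qm"
      unfolding qm_def by (rule mnc)
  next
    let ?T1 = "subtopology ?XX {x \<in> topspace ?XX. pp x \<le> qm x}"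
    define \<beta> where "\<beta> = (\<lambda>x::((nat\<Rightarrow>real)\<times>(nat\<Rightarrow>real))\<times>real.
        ((\<lambda>i. fst (fst x) i - 2 * (1 - snd x) * vv n k i), snd (fst x)))"
    have b1: "continuous_map ?T1 (simplex_top n) (fst \<circ> \<beta>)"
    proof (rule continuous_map_simplex_coord)
      fix i
      have e: "(\<lambda>x. (fst \<circ> \<beta>) x i) = (\<lambda>x. fst (fst x) i - 2 * (1 - snd x) * vv n k i)"
        by (simp add: \<beta>_def)
      show "continuous_map ?T1 euclideanreal (\<lambda>x. (fst \<circ> \<beta>) x i)"
        unfolding e by (intro continuous_map_from_subtopology continuous_intros pj1 ptau)
    next
      fix x assume "x \<in> topspace ?T1"
      then have x: "fst (fst x) \<in> standard_simplex n" "snd x \<in> {0..1}" "pp x \<le> qm x" by auto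
      have e: "(fst \<circ> \<beta>) x = (\<lambda>i. fst (fst x) i - 2 * (1 - snd x) * vv n k i)"
        by (simp add: \<beta>_def)
      show "(fst \<circ> \<beta>) x \<in> standard_simplex n"
        unfolding e
        by (rule shift_simplex[OF x(1) n k]) (use x in \<open>auto simp: pp_def qm_def\<close>)
    qed
    have e2: "snd \<circ> \<beta> = (\<lambda>x. snd (fst x))" by (simp add: \<beta>_def o_def)
    have b2: "continuous_map ?T1 ?A (snd \<circ> \<beta>)"
      unfolding e2 by (intro continuous_map_from_subtopology csf)
    have bc: "continuous_map ?T1 ?P \<beta>"
      using b1 b2 by (rule continuous_map_pairwise[THEN iffD2, OF conjI])
    have "f1 = (\<lambda>p. y (fst p) (snd p)) \<circ> \<beta>" unfolding f1_def \<beta>_def by (simp add: o_def)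
    then show "continuous_map ?T1 Y f1"
      using continuous_map_compose[OF bc Y0] by simp
  next
    let ?T2 = "subtopology ?XX {x \<in> topspace ?XX. qm x \<le> pp x}"
    define \<gamma> where "\<gamma> = (\<lambda>x::((nat\<Rightarrow>real)\<times>(nat\<Rightarrow>real))\<times>real.
        (fst x, snd x / (1 - mn n k (fst (fst x)) / 2)))"
    have g2: "continuous_map ?T2 II (snd \<circ> \<gamma>)"
      unfolding continuous_map_in_subtopology
    proof
      have den: "\<And>x. x \<in> topspace ?T2 \<Longrightarrow> 1 - mn n k (fst (fst x)) / 2 \<noteq> 0"
      proof -
        fix x assume "x \<in> topspace ?T2"
        then have "fst (fst x) \<in> standard_simplex n" by auto
        then show "1 - mn n k (fst (fst x)) / 2 \<noteq> 0" using mn01 by fastforce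
      qed
      have e: "snd \<circ> \<gamma> = (\<lambda>x. snd x / (1 - mn n k (fst (fst x)) / 2))" by (simp add: \<gamma>_def o_def)
      show "continuous_map ?T2 euclideanreal (snd \<circ> \<gamma>)"
        unfolding e
        by (intro continuous_map_real_divide continuous_intros continuous_map_from_subtopology ptau mnc den) auto
      show "(snd \<circ> \<gamma>) \<in> topspace ?T2 \<rightarrow> {0..1}"
      proof
        fix x assume x1: "x \<in> topspace ?T2"
        define t where "t = (snd \<circ> \<gamma>) x"
        have x: "x \<in> topspace ?T2" "t = snd x / (1 - mn n k (fst (fst x)) / 2)"
          using x1 unfolding t_def \<gamma>_def by auto
        then have xx: "fst (fst x) \<in> standard_simplex n" "snd x \<in> {0..1}" "qm x \<le> pp x" by auto
        have m: "0 \<le> mn n k (fst (fst x))" "mn n k (fst (fst x)) \<le> 1" using mn01 xx(1) by auto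
        have "mn n k (fst (fst x)) \<le> 2 * (1 - snd x)" using xx(3) by (simp add: qm_def pp_def)
        then have "snd x \<le> 1 - mn n k (fst (fst x)) / 2" by simp
        moreover have d: "0 < 1 - mn n k (fst (fst x)) / 2" using m by simp
        ultimately have "snd x / (1 - mn n k (fst (fst x)) / 2) \<le> 1" by (simp add: pos_divide_le_eq)
        moreover have "0 \<le> snd x / (1 - mn n k (fst (fst x)) / 2)" using xx(2) d by simp
        ultimately have "t \<in> {0..1}" using x(2) by simp
        then show "(snd \<circ> \<gamma>) x \<in> {0..1}" unfolding t_def .
      qed
    qed
    have gc: "continuous_map ?T2 ?XX \<gamma>"
    proof (rule continuous_map_pairwise[THEN iffD2], rule conjI)
      have e: "fst \<circ> \<gamma> = fst" by (simp add: \<gamma>_def o_def)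
      show "continuous_map ?T2 ?P (fst \<circ> \<gamma>)"
        unfolding e by (intro continuous_map_from_subtopology continuous_map_fst)
    qed (rule g2)
    have "g1 = (\<lambda>(p, \<tau>). snd (H0 (fst p) (snd p)) \<tau>) \<circ> \<gamma>" unfolding g1_def \<gamma>_def by (simp add: o_def)
    then show "continuous_map ?T2 Y g1"
      using continuous_map_compose[OF gc A2] by simp
  next
    fix x assume x: "x \<in> topspace ?XX" "pp x = qm x"
    then have xx: "fst (fst x) \<in> standard_simplex n" "snd (fst x) \<in> standard_simplex c" "snd x \<in> {0..1}" by auto
    let ?s = "fst (fst x)" and ?w = "snd (fst x)"
    have m: "mn n k ?s \<le> 1" using mn01 xx(1) by auto
    have e1: "2 * (1 - snd x) = mn n k ?s" using x(2) by (simp add: pp_def qm_def)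
    have r: "(\<lambda>i. ?s i - 2 * (1 - snd x) * vv n k i) = rho n k ?s" unfolding rho_def e1 ..
    have "snd x / (1 - mn n k ?s / 2) = 1" using e1 m by (auto simp: divide_simps)
    then have "g1 x = snd (h (rho n k ?s) ?w) 1" unfolding g1_def using H0h[OF xx(1)] by simp
    also have "\<dots> = y (rho n k ?s) ?w" using hY H0h[OF xx(1)] xx(2) by blast
    finally show "f1 x = g1 x" unfolding f1_def r by simp
  qed

  have Gp0: "\<And>s w. s \<in> standard_simplex n \<Longrightarrow> G ((s, w), 0) = snd (H0 s w) 0"
  proof -
    fix s w assume s: "s \<in> standard_simplex n"
    have "\<not> pp ((s, w), 0) \<le> qm ((s, w), 0)" using mn01[OF s] by (simp add: pp_def qm_def)
    then show "G ((s, w), 0) = snd (H0 s w) 0" by (simp add: G_def g1_def)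
  qed
  have Gp1: "\<And>s w. s \<in> standard_simplex n \<Longrightarrow> G ((s, w), 1) = y s w"
  proof -
    fix s w assume s: "s \<in> standard_simplex n"
    have "pp ((s, w), 1) \<le> qm ((s, w), 1)" using mn01[OF s] by (simp add: pp_def qm_def)
    then show "G ((s, w), 1) = y s w" by (simp add: G_def f1_def)
  qed
  have Gphi: "\<And>s w (\<tau>::real). s \<in> standard_simplex n \<Longrightarrow> w \<in> standard_simplex c \<Longrightarrow> \<tau> \<in> {0..1} \<Longrightarrow>
       \<phi>Y (G ((s, w), \<tau>)) = \<psi> w"
  proof -
    fix s w and \<tau> :: real assume s: "s \<in> standard_simplex n" and w: "w \<in> standard_simplex c" and t: "\<tau> \<in> {0..1}"
    have m: "0 \<le> mn n k s" "mn n k s \<le> 1" using mn01[OF s] by auto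
    show "\<phi>Y (G ((s, w), \<tau>)) = \<psi> w"
    proof (cases "pp ((s, w), \<tau>) \<le> qm ((s, w), \<tau>)")
      case True
      then have le: "2 * (1 - \<tau>) \<le> mn n k s" by (simp add: pp_def qm_def)
      have pt: "(\<lambda>i. s i - 2 * (1 - \<tau>) * vv n k i) \<in> standard_simplex n"
        by (rule shift_simplex[OF s n k]) (use t le in auto)
      have "G ((s, w), \<tau>) = y (\<lambda>i. s i - 2 * (1 - \<tau>) * vv n k i) w"
        using True by (simp add: G_def f1_def)
      then show ?thesis using yf[OF pt] w unfolding filtered_map_def by simp
    next
      case False
      then have lt: "mn n k s < 2 * (1 - \<tau>)" by (simp add: pp_def qm_def)
      have d: "0 < 1 - mn n k s / 2" using m by simp
      have "\<tau> \<le> 1 - mn n k s / 2" using lt by simp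
      then have "\<tau> / (1 - mn n k s / 2) \<le> 1" using d by (simp add: pos_divide_le_eq)
      moreover have "0 \<le> \<tau> / (1 - mn n k s / 2)" using t d by simp
      ultimately have t': "\<tau> / (1 - mn n k s / 2) \<in> {0..1}" by simp
      have "G ((s, w), \<tau>) = snd (H0 s w) (\<tau> / (1 - mn n k s / 2))"
        using False by (simp add: G_def g1_def)
      then show ?thesis using S4[OF _ t'] H0S[OF s w] by simp
    qed
  qed
  define Fz where "Fz = (\<lambda>p::(nat\<Rightarrow>real)\<times>(nat\<Rightarrow>real). (fst (H0 (fst p) (snd p)), restrict (\<lambda>\<tau>. G (p, \<tau>)) {0..1}))"
  have Gpath: "\<And>p. p \<in> topspace ?P \<Longrightarrow> continuous_map II Y (restrict (\<lambda>\<tau>. G (p, \<tau>)) {0..1})"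
  proof -
    fix p assume p: "p \<in> topspace ?P"
    have "continuous_map II ?XX (\<lambda>\<tau>. (p, \<tau>))"
      using p by (intro continuous_map_pairwise[THEN iffD2, OF conjI]) (auto simp: o_def)
    then have "continuous_map II Y (\<lambda>\<tau>. G (p, \<tau>))"
      using continuous_map_compose[OF _ Gc] by (simp add: o_def)
    then show "continuous_map II Y (restrict (\<lambda>\<tau>. G (p, \<tau>)) {0..1})"
      by (rule continuous_map_eq) simp
  qed
  have FzS: "\<And>p. p \<in> standard_simplex n \<times> standard_simplex c \<Longrightarrow> Fz p \<in> S"
  proof -
    fix p assume p: "p \<in> standard_simplex n \<times> standard_simplex c"
    obtain s w where sw: "p = (s, w)" "s \<in> standard_simplex n" "w \<in> standard_simplex c" using p by auto
    have HS: "H0 s w \<in> S" "\<phi>X (fst (H0 s w)) = \<psi> w" using H0S[OF sw(2,3)] by auto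
    show "Fz p \<in> S"
      unfolding S_def pathS_def
    proof (intro CollectI conjI ballI)
      show "fst (Fz p) \<in> topspace X" using S1[OF HS(1)] sw by (simp add: Fz_def)
      show "continuous_map II Y (snd (Fz p))" using Gpath[of p] p by (simp add: Fz_def)
      show "snd (Fz p) \<in> extensional {0..1}" by (simp add: Fz_def)
      show "snd (Fz p) 0 = f (fst (Fz p))" using Gp0[OF sw(2)] S3[OF HS(1)] sw by (simp add: Fz_def)
      fix \<tau> :: real assume t: "\<tau> \<in> {0..1}"
      show "\<phi>Y (snd (Fz p) \<tau>) = \<phi>X (fst (Fz p))"
        using Gphi[OF sw(2,3) t] HS(2) t sw by (simp add: Fz_def)
    qed
  qed
  have Fzc: "continuous_map ?P ?Z Fz"
  proof (rule cont_prod_into_Ztop[OF FzS])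
    show "continuous_map ?P X (\<lambda>x. fst (Fz x))" using A1 by (simp add: Fz_def)
    show "continuous_map (prod_topology ?P II) Y (\<lambda>(x, \<tau>). snd (Fz x) \<tau>)"
      by (rule continuous_map_eq[OF Gc]) (auto simp: Fz_def)
  qed
  define zz where "zz = restrict (\<lambda>s. restrict (\<lambda>w. Fz (s, w)) (standard_simplex c)) (standard_simplex n)"
  have zzc: "continuous_map (simplex_top n) ?CO zz"
  proof (rule continuous_map_eq[OF continuous_map_curry_compact_open[OF Fzc]])
    fix s assume "s \<in> topspace (simplex_top n)"
    then show "restrict (\<lambda>a. Fz (s, a)) (topspace ?A) = zz s" by (simp add: zz_def)
  qed
  have zzs: "\<And>s w. s \<in> standard_simplex n \<Longrightarrow> w \<in> standard_simplex c \<Longrightarrow> zz s w = Fz (s, w)"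
    by (simp add: zz_def)
  have zzf: "\<And>s. s \<in> standard_simplex n \<Longrightarrow> filtered_map ?A \<psi> ?Z (\<lambda>z. \<phi>X (fst z)) (zz s)"
  proof -
    fix s assume s: "s \<in> standard_simplex n"
    have "zz s \<in> topspace ?CO" using cm_in[OF zzc] s by simp
    then have "continuous_map ?A ?Z (zz s)" by (simp add: topspace_compact_open)
    moreover have "\<forall>w\<in>topspace ?A. \<phi>X (fst (zz s w)) = \<psi> w"
      using zzs[OF s] H0S[OF s] by (simp add: Fz_def)
    ultimately show "filtered_map ?A \<psi> ?Z (\<lambda>z. \<phi>X (fst z)) (zz s)"
      unfolding filtered_map_def by simp
  qed
  have zsing: "singular_simplex n M zz"
    unfolding M_def singular_simplex_iff cont_fms using zzc zzf by (simp add: zz_def)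
  have zface: "\<And>i. i \<le> n \<Longrightarrow> i \<noteq> k \<Longrightarrow> singular_face n i zz = x i"
  proof -
    fix i assume i: "i \<le> n" "i \<noteq> k"
    show "singular_face n i zz = x i"
    proof
      fix u
      show "singular_face n i zz u = x i u"
      proof (cases "u \<in> standard_simplex (n - 1)")
        case False
        then show ?thesis using xe[OF i] by (simp add: singular_face_def extensional_def)
      next
        case True
        define sf where "sf = simplical_face i u"
        have sfS: "sf \<in> standard_simplex n"
          unfolding sf_def by (rule simplical_face_in_standard_simplex[OF n i(1)]) (use True in simp)
        have sfH: "sf \<in> hornset n k" using sfS i face_zero[of i u] by (auto simp: hornset_def sf_def)
        have mn0: "mn n k sf = 0" by (rule horn_mn[OF sfH n k])
        have rid: "rho n k sf = sf" by (rule rho_id[OF sfH n k])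
        have H0sf: "H0 sf = x i u"
          using H0h[OF sfS] rid heq[OF sfH i] face_zero[of i u] del_face[of i u] by (simp add: sf_def)
        have "zz sf = x i u"
        proof
          fix w
          show "zz sf w = x i u w"
          proof (cases "w \<in> standard_simplex c")
            case False
            have "x i u \<in> extensional (standard_simplex c)"
              using xt[OF i True] by (simp add: topspace_compact_open)
            then show ?thesis using False sfS by (simp add: zz_def extensional_def)
          next
            case True
            have HS: "H0 sf w \<in> S" using H0S[OF sfS True] by simp
            have "restrict (\<lambda>\<tau>. G ((sf, w), \<tau>)) {0..1} = snd (H0 sf w)"
            proof
              fix \<tau>
              show "restrict (\<lambda>\<tau>. G ((sf, w), \<tau>)) {0..1} \<tau> = snd (H0 sf w) \<tau>"
              proof (cases "\<tau> \<in> {0..1}")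
                case False
                then show ?thesis using S2[OF HS] unfolding extensional_def restrict_def by auto
              next
                case t: True
                show ?thesis
                proof (cases "\<tau> = 1")
                  case True
                  have "G ((sf, w), \<tau>) = y sf w" using Gp1[OF sfS] True by simp
                  also have "\<dots> = snd (h sf w) 1" using hY[OF sfH \<open>w \<in> standard_simplex c\<close>] by simp
                  also have "\<dots> = snd (H0 sf w) \<tau>" using H0h[OF sfS] rid True by simp
                  finally show ?thesis using t by simp
                next
                  case False
                  then have "\<not> pp ((sf, w), \<tau>) \<le> qm ((sf, w), \<tau>)" using t mn0 by (simp add: pp_def qm_def)
                  then show ?thesis using t mn0 by (simp add: G_def g1_def)
                qed
              qed
            qed
            then have "Fz (sf, w) = H0 sf w" by (simp add: Fz_def)
            then show ?thesis using zzs[OF sfS True] H0sf by simp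
          qed
        qed
        then show ?thesis using True by (simp add: singular_face_def sf_def)
      qed
    qed
  qed
  have zmap: "sing_map n qq zz = y"
  proof
    fix s
    show "sing_map n qq zz s = y s"
    proof (cases "s \<in> standard_simplex n")
      case False
      then show ?thesis using ye by (simp add: sing_map_def extensional_def)
    next
      case True
      have "qq (zz s) = y s"
      proof
        fix w
        show "qq (zz s) w = y s w"
        proof (cases "w \<in> standard_simplex c")
          case False
          then show ?thesis using yt[OF True] by (simp add: qq_def postcomp_def extensional_def)
        next
          case w: True
          have "qq (zz s) w = snd (Fz (s, w)) 1" using zzs[OF True w] w by (simp add: qq_def postcomp_def)
          also have "\<dots> = G ((s, w), 1)" by (simp add: Fz_def)
          also have "\<dots> = y s w" by (rule Gp1[OF True])
          finally show ?thesis .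
        qed
      qed
      then show ?thesis using True by (simp add: sing_map_def)
    qed
  qed
  show ?thesis using zsing zface zmap by blast
qed



theorem lemma2p11:
  fixes X :: "'a topology" and \<phi>X :: "'a \<Rightarrow> 'p::order \<Rightarrow> real"
    and Y :: "'b topology" and \<phi>Y :: "'b \<Rightarrow> 'p \<Rightarrow> real"
    and f :: "'a \<Rightarrow> 'b"
  assumes "strongly_filtered X \<phi>X" and "strongly_filtered Y \<phi>Y"
    and "filtered_map X \<phi>X Y \<phi>Y f"
  shows "\<exists>(Z :: ('a \<times> (real \<Rightarrow> 'b)) topology) \<phi>Z q i r.
           strongly_filtered Z \<phi>Z
         \<and> filtered_map Z \<phi>Z Y \<phi>Y q \<and> filtered_fibration Z \<phi>Z Y \<phi>Y q
         \<and> filtered_map X \<phi>X Z \<phi>Z i \<and> filtered_map Z \<phi>Z X \<phi>X r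
         \<and> (\<forall>x \<in> topspace X. q (i x) = f x)
         \<and> (\<forall>x \<in> topspace X. r (i x) = x)
         \<and> filtered_homotopic Z \<phi>Z (i \<circ> r) id"
proof -
  define S where "S = pathS X \<phi>X Y \<phi>Y f"
  define Z where "Z = Ztop X Y S"
  define \<phi>Z where "\<phi>Z = (\<lambda>z::'a \<times> (real \<Rightarrow> 'b). \<phi>X (fst z))"
  define q where "q = (\<lambda>z::'a \<times> (real \<Rightarrow> 'b). snd z (1::real))"
  define i where "i = (\<lambda>x. (x, restrict (\<lambda>\<tau>::real. f x) {0..1}))"
  define r where "r = (fst :: 'a \<times> (real \<Rightarrow> 'b) \<Rightarrow> 'a)"
  have fc: "continuous_map X Y f" and fphi: "\<And>x. x \<in> topspace X \<Longrightarrow> \<phi>Y (f x) = \<phi>X x"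
    using assms(3) unfolding filtered_map_def by auto
  have dgX: "delta_generated X" and phic: "continuous_map X nerve_realization \<phi>X"
    using assms(1) unfolding strongly_filtered_def by auto
  have S1: "\<And>z. z \<in> S \<Longrightarrow> fst z \<in> topspace X"
    unfolding S_def by (rule pathS_props(1))
  have S2: "\<And>z. z \<in> S \<Longrightarrow> continuous_map II Y (snd z) \<and> snd z \<in> extensional {0..1}"
    unfolding S_def using pathS_props(2,3) by metis
  have S3: "\<And>z. z \<in> S \<Longrightarrow> snd z 0 = f (fst z)"
    unfolding S_def by (rule pathS_props(4))
  have S4: "\<And>z \<tau>. z \<in> S \<Longrightarrow> \<tau> \<in> {0..1} \<Longrightarrow> \<phi>Y (snd z \<tau>) = \<phi>X (fst z)"
    unfolding S_def by (rule pathS_props(5))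
  have tZ: "topspace Z = S" by (simp add: Z_def)
  have fstc: "continuous_map Z X fst" unfolding Z_def by (rule continuous_map_fst_Ztop[OF S1])
  have iS: "\<And>x. x \<in> topspace X \<Longrightarrow> i x \<in> S"
  proof -
    fix x assume x: "x \<in> topspace X"
    have fx: "f x \<in> topspace Y" using cm_in[OF fc x] .
    have "continuous_map II Y (\<lambda>\<tau>. f x)" using fx by simp
    then have "continuous_map II Y (restrict (\<lambda>\<tau>::real. f x) {0..1})"
      by (rule continuous_map_eq) simp
    then show "i x \<in> S"
      unfolding S_def pathS_def i_def using x fphi[OF x] by simp
  qed
  have P1: "strongly_filtered Z \<phi>Z"
    unfolding strongly_filtered_def
  proof
    show "delta_generated Z" unfolding Z_def by (rule delta_generated_Ztop)
    show "continuous_map Z nerve_realization \<phi>Z"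
      using continuous_map_compose[OF fstc phic] by (simp add: \<phi>Z_def o_def)
  qed
  have P2: "filtered_map Z \<phi>Z Y \<phi>Y q"
    unfolding filtered_map_def
  proof
    show "continuous_map Z Y q"
      unfolding Z_def
    proof (rule continuous_map_from_Ztop)
      fix z assume "z \<in> S"
      then show "q z \<in> topspace Y" using cm_in[of II Y "snd z" 1] S2 by (simp add: q_def)
    next
      fix n \<sigma> assume g: "goodZ X Y S n \<sigma>"
      then have c: "continuous_map (prod_topology (simplex_top n) II) Y (\<lambda>(t, \<tau>). snd (\<sigma> t) \<tau>)"
        unfolding goodZ_def by blast
      have "continuous_map (simplex_top n) (prod_topology (simplex_top n) II) (\<lambda>t. (t, 1))"
        by (intro continuous_map_pairwise[THEN iffD2, OF conjI]) (auto simp: o_def)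
      from continuous_map_compose[OF this c]
      show "continuous_map (simplex_top n) Y (q \<circ> \<sigma>)" by (simp add: q_def o_def)
    qed
    show "\<forall>x\<in>topspace Z. \<phi>Y (q x) = \<phi>Z x" using S4 tZ by (simp add: q_def \<phi>Z_def)
  qed
  have P3: "filtered_fibration Z \<phi>Z Y \<phi>Y q"
    unfolding filtered_fibration_def kan_fibration_sing_def
  proof (intro allI impI)
    fix m :: nat and c :: "nat \<Rightarrow> 'p" and n k x y
    assume a: "strict_chain m c" "1 \<le> n" "k \<le> n"
      "\<forall>i\<le>n. i \<noteq> k \<longrightarrow> singular_simplex (n - 1) (filtered_mapping_space (simplex_top m) (realize_simplex m c) Z \<phi>Z) (x i)"
      "\<forall>i j. i < j \<longrightarrow> j \<le> n \<longrightarrow> i \<noteq> k \<longrightarrow> j \<noteq> k \<longrightarrow> singular_face (n - 1) i (x j) = singular_face (n - 1) (j - 1) (x i)"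
      "singular_simplex n (filtered_mapping_space (simplex_top m) (realize_simplex m c) Y \<phi>Y) y"
      "\<forall>i\<le>n. i \<noteq> k \<longrightarrow> singular_face n i y = sing_map (n - 1) (postcomp (simplex_top m) q) (x i)"
    show "\<exists>z. singular_simplex n (filtered_mapping_space (simplex_top m) (realize_simplex m c) Z \<phi>Z) z \<and>
             (\<forall>i\<le>n. i \<noteq> k \<longrightarrow> singular_face n i z = x i) \<and>
             sing_map n (postcomp (simplex_top m) q) z = y"
      using kan_lift[where n=n and k=k and x=x and y=y and c=m and \<psi>="realize_simplex m c"
        and X=X and \<phi>X=\<phi>X and Y=Y and \<phi>Y=\<phi>Y and f=f] a(2-7)
      unfolding Z_def \<phi>Z_def q_def S_def by blast
  qed
  have P4: "filtered_map X \<phi>X Z \<phi>Z i"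
    unfolding filtered_map_def
  proof
    show "continuous_map X Z i"
    proof (rule continuous_map_from_delta_generated[OF dgX])
      fix x assume "x \<in> topspace X" then show "i x \<in> topspace Z" using iS tZ by simp
    next
      fix n \<sigma> assume \<sigma>: "continuous_map (simplex_top n) X \<sigma>"
      show "continuous_map (simplex_top n) Z (i \<circ> \<sigma>)"
        unfolding Z_def
      proof (rule goodZ_imp_cont, unfold goodZ_def, intro conjI ballI)
        fix t assume "t \<in> standard_simplex n"
        then show "(i \<circ> \<sigma>) t \<in> S" using iS cm_in[OF \<sigma>] by simp
      next
        show "continuous_map (simplex_top n) X (\<lambda>t. fst ((i \<circ> \<sigma>) t))"
          using \<sigma> by (simp add: i_def o_def)
      next
        have "continuous_map (prod_topology (simplex_top n) II) Y (\<lambda>p. f (\<sigma> (fst p)))"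
          using continuous_map_compose[OF continuous_map_compose[OF continuous_map_fst \<sigma>] fc]
          by (simp add: o_def)
        then show "continuous_map (prod_topology (simplex_top n) II) Y (\<lambda>(t, \<tau>). snd ((i \<circ> \<sigma>) t) \<tau>)"
          by (rule continuous_map_eq) (auto simp: i_def)
      qed
    qed
    show "\<forall>x\<in>topspace X. \<phi>Z (i x) = \<phi>X x" by (simp add: \<phi>Z_def i_def)
  qed
  have P5: "filtered_map Z \<phi>Z X \<phi>X r"
    unfolding filtered_map_def r_def \<phi>Z_def using fstc by simp
  have P6: "\<forall>x \<in> topspace X. q (i x) = f x" by (simp add: q_def i_def)
  have P7: "\<forall>x \<in> topspace X. r (i x) = x" by (simp add: r_def i_def)
  define H where "H = (\<lambda>p::('a \<times> (real \<Rightarrow> 'b)) \<times> real.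
      (fst (fst p), restrict (\<lambda>\<tau>. snd (fst p) (\<tau> * snd p)) {0..1}))"
  have HS: "\<And>z t. z \<in> S \<Longrightarrow> t \<in> {0..1} \<Longrightarrow> H (z, t) \<in> S"
  proof -
    fix z and t :: real assume z: "z \<in> S" and t: "t \<in> {0..1}"
    have mt: "continuous_map II II (\<lambda>\<tau>. \<tau> * t)"
      unfolding continuous_map_in_subtopology
    proof
      have idc: "continuous_map II euclideanreal (\<lambda>x::real. x)"
        using continuous_map_into_fulltopology[OF continuous_map_id[of II]] by (simp add: id_def)
      show "continuous_map II euclideanreal (\<lambda>\<tau>. \<tau> * t)"
        by (intro continuous_map_real_mult idc) auto
      show "(\<lambda>\<tau>. \<tau> * t) \<in> topspace II \<rightarrow> {0..1}" using t by (auto simp: mult_le_one)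
    qed
    have "continuous_map II Y (\<lambda>\<tau>. snd z (\<tau> * t))"
      using continuous_map_compose[OF mt, of Y "snd z"] S2[OF z] by (simp add: o_def)
    then have pc: "continuous_map II Y (restrict (\<lambda>\<tau>. snd z (\<tau> * t)) {0..1})"
      by (rule continuous_map_eq) simp
    have "\<And>\<tau>. \<tau> \<in> {0..1} \<Longrightarrow> \<tau> * t \<in> {0..1}" using t by (auto simp: mult_le_one)
    then show "H (z, t) \<in> S"
      unfolding S_def pathS_def H_def
      using S1[OF z] pc S3[OF z] S4[OF z] by simp
  qed
  have P8: "filtered_homotopic Z \<phi>Z (i \<circ> r) id"
    unfolding filtered_homotopic_def
  proof (intro exI conjI)
    show "filtered_map (dtop (prod_topology Z II)) (\<lambda>(z, t). \<phi>Z z) Z \<phi>Z H"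
      unfolding filtered_map_def
    proof
      show "continuous_map (dtop (prod_topology Z II)) Z H"
      proof (rule continuous_map_from_dtop)
        fix p assume "p \<in> topspace (prod_topology Z II)"
        then show "H p \<in> topspace Z" using HS tZ by (metis mem_Sigma_iff prod.collapse topspace_II topspace_prod_topology)
      next
        fix n \<sigma> assume \<sigma>: "continuous_map (simplex_top n) (prod_topology Z II) \<sigma>"
        have \<sigma>1: "continuous_map (simplex_top n) Z (\<lambda>t. fst (\<sigma> t))"
          using continuous_map_compose[OF \<sigma> continuous_map_fst] by (simp add: o_def)
        have \<sigma>2: "continuous_map (simplex_top n) II (\<lambda>t. snd (\<sigma> t))"
          using continuous_map_compose[OF \<sigma> continuous_map_snd] by (simp add: o_def)
        show "continuous_map (simplex_top n) Z (H \<circ> \<sigma>)"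
          unfolding Z_def
        proof (rule goodZ_imp_cont, unfold goodZ_def, intro conjI ballI)
          fix t assume "t \<in> standard_simplex n"
          then have "\<sigma> t \<in> S \<times> {0..1}" using cm_in[OF \<sigma>] tZ by simp
          then show "(H \<circ> \<sigma>) t \<in> S" using HS by (metis mem_Times_iff o_apply prod.collapse)
        next
          show "continuous_map (simplex_top n) X (\<lambda>t. fst ((H \<circ> \<sigma>) t))"
            using continuous_map_compose[OF \<sigma>1 fstc] by (simp add: o_def H_def)
        next
          have c2: "continuous_map (prod_topology (simplex_top n) II) Y (\<lambda>(w, \<tau>). snd (fst (\<sigma> w)) \<tau>)"
            using cont_into_Ztop_imp(2)[OF S1 S2 \<sigma>1[unfolded Z_def]] .
          have \<kappa>: "continuous_map (prod_topology (simplex_top n) II) (prod_topology (simplex_top n) II)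
                 (\<lambda>p. (fst p, snd p * snd (\<sigma> (fst p))))"
          proof (rule continuous_map_pairwise[THEN iffD2, OF conjI])
            show "continuous_map (prod_topology (simplex_top n) II) (simplex_top n) (fst \<circ> (\<lambda>p. (fst p, snd p * snd (\<sigma> (fst p)))))"
              by (simp add: o_def continuous_map_fst)
            have r1: "continuous_map (prod_topology (simplex_top n) II) euclideanreal (\<lambda>p. snd p)"
              using continuous_map_into_fulltopology[OF continuous_map_snd] .
            have r2: "continuous_map (prod_topology (simplex_top n) II) euclideanreal (\<lambda>p. snd (\<sigma> (fst p)))"
              using continuous_map_into_fulltopology[OF continuous_map_compose[OF continuous_map_fst \<sigma>2]]
              by (simp add: o_def)
            show "continuous_map (prod_topology (simplex_top n) II) II (snd \<circ> (\<lambda>p. (fst p, snd p * snd (\<sigma> (fst p)))))"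
              unfolding continuous_map_in_subtopology o_def snd_conv
            proof
              show "continuous_map (prod_topology (simplex_top n) II) euclideanreal (\<lambda>x. snd x * snd (\<sigma> (fst x)))"
                by (intro continuous_map_real_mult r1 r2)
              show "(\<lambda>x. snd x * snd (\<sigma> (fst x))) \<in> topspace (prod_topology (simplex_top n) II) \<rightarrow> {0..1}"
              proof
                fix p assume p: "p \<in> topspace (prod_topology (simplex_top n) II)"
                then have "snd (\<sigma> (fst p)) \<in> {0..1}" using cm_in[OF \<sigma>2] by auto
                moreover have "snd p \<in> {0..1}" using p by auto
                ultimately show "snd p * snd (\<sigma> (fst p)) \<in> {0..1}" by (auto simp: mult_le_one)
              qed
            qed
          qed
          have "continuous_map (prod_topology (simplex_top n) II) Y
              (\<lambda>p. snd (fst (\<sigma> (fst p))) (snd p * snd (\<sigma> (fst p))))"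
            using continuous_map_compose[OF \<kappa> c2] by (simp add: o_def case_prod_unfold)
          then show "continuous_map (prod_topology (simplex_top n) II) Y (\<lambda>(t, \<tau>). snd ((H \<circ> \<sigma>) t) \<tau>)"
            by (rule continuous_map_eq) (auto simp: H_def)
        qed
      qed
      show "\<forall>x\<in>topspace (dtop (prod_topology Z II)). \<phi>Z (H x) = (case x of (z, t) \<Rightarrow> \<phi>Z z)"
        by (auto simp: H_def \<phi>Z_def)
    qed
    show "\<forall>z\<in>topspace Z. H (z, 0) = (i \<circ> r) z \<and> H (z, 1) = id z"
    proof
      fix z assume "z \<in> topspace Z"
      then have z: "z \<in> S" using tZ by simp
      have "H (z, 0) = (i \<circ> r) z" using S3[OF z] by (simp add: H_def i_def r_def)
      moreover have "H (z, 1) = id z" using S2[OF z] by (simp add: H_def extensional_restrict)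
      ultimately show "H (z, 0) = (i \<circ> r) z \<and> H (z, 1) = id z" by simp
    qed
  qed
  show ?thesis
    apply (rule exI[of _ Z], rule exI[of _ \<phi>Z], rule exI[of _ q], rule exI[of _ i], rule exI[of _ r])
    using P1 P2 P3 P4 P5 P6 P7 P8 by blast
qed


end
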